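(* Let $n\ge 1$. There exists a listing $\pi_0,\pi_1,\ldots,\pi_{n!-1}$ of all permutations of $\{1,2,\ldots,n\}$ (written as words) such that consecutive permutations $\pi_i,\pi_{i+1}$ differ by interchanging the symbols in two adjacent positions, and $\pi_{i+n!/2}$ is the reversal of $\pi_i$ for all $0\le i<n!/2$, if and only if $n\le 4$ or $n\equiv 0,1 \pmod 4$.
   Context: The reversal of a word $a_1a_2\cdots a_n$ is $a_na_{n-1}\cdots a_1$. Such a listing is called a reverse (adjacent interchange) Gray code for permutations of $12\ldots n$. *)

theory Defs
  imports "HOL-Combinatorics.Multiset_Permutations"
begin

definition adj_swap :: "nat \<Rightarrow> 'a list \<Rightarrow> 'a list" where
  "adj_swap j w = w[j := w ! Suc j, Suc j := w ! j]"

definition adj_interchange :: "'a list \<Rightarrow> 'a list \<Rightarrow> bool" where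
  "adj_interchange u v \<longleftrightarrow> (\<exists>j. Suc j < length u \<and> v = adj_swap j u)"

definition reverse_adj_gray_code :: "nat \<Rightarrow> nat list list \<Rightarrow> bool" where
  "reverse_adj_gray_code n L \<longleftrightarrow>
     length L = fact n \<and> distinct L \<and> set L = permutations_of_set {1..n} \<and>
     (\<forall>i. Suc i < length L \<longrightarrow> adj_interchange (L ! i) (L ! Suc i)) \<and>
     (\<forall>i < fact n div 2. L ! (i + fact n div 2) = rev (L ! i))"

end

theory Submission
  imports Defs
begin


lemma length_adj_swap[simp]: "length (adj_swap j w) = length w"
  by (simp add: adj_swap_def)

lemma adj_swap_Cons_Suc[simp]: "adj_swap (Suc j) (x # w) = x # adj_swap j w"
  by (simp add: adj_swap_def)

lemma adj_swap_0[simp]: "adj_swap 0 (a # b # w) = b # a # w"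
  by (simp add: adj_swap_def)

lemma adj_swap_append_left: "adj_swap (length u + j) (u @ w) = u @ adj_swap j w"
  by (induction u) auto

lemma adj_swap_append_right: "Suc j < length w \<Longrightarrow> adj_swap j (w @ v) = adj_swap j w @ v"
  by (simp add: adj_swap_def list_update_append nth_append)

lemma nth_adj_swap:
  "Suc j < length w \<Longrightarrow> i < length w \<Longrightarrow>
   adj_swap j w ! i = (if i = j then w ! Suc j else if i = Suc j then w ! j else w ! i)"
  by (simp add: adj_swap_def nth_list_update)

lemma adj_swap_invol: "Suc j < length w \<Longrightarrow> adj_swap j (adj_swap j w) = w"
  by (rule nth_equalityI) (auto simp: nth_adj_swap)

lemma rev_adj_swap:
  "Suc j < length w \<Longrightarrow> rev (adj_swap j w) = adj_swap (length w - 2 - j) (rev w)"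
proof (rule nth_equalityI)
  fix i assume a: "Suc j < length w" "i < length (rev (adj_swap j w))"
  then have i: "i < length w" by simp
  have e: "rev (adj_swap j w) ! i = adj_swap j w ! (length w - Suc i)"
    using i by (simp add: rev_nth)
  have f: "adj_swap (length w - 2 - j) (rev w) ! i =
     (if i = length w - 2 - j then rev w ! Suc (length w - 2 - j)
      else if i = Suc (length w - 2 - j) then rev w ! (length w - 2 - j) else rev w ! i)"
    using a i by (intro nth_adj_swap) auto
  show "rev (adj_swap j w) ! i = adj_swap (length w - 2 - j) (rev w) ! i"
    unfolding e f using a i by (auto simp: nth_adj_swap rev_nth)
qed simp

lemma mset_adj_swap: "Suc j < length w \<Longrightarrow> mset (adj_swap j w) = mset w"
proof (induction w arbitrary: j)
  case Nil then show ?case by simp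
next
  case (Cons x w)
  show ?case
  proof (cases j)
    case 0
    with Cons.prems obtain b w' where "w = b # w'" by (cases w) auto
    with 0 show ?thesis by simp
  next
    case (Suc j')
    with Cons show ?thesis by simp
  qed
qed

lemma adj_swap_same: "Suc j < length w \<Longrightarrow> adj_swap j w = w \<longleftrightarrow> w ! j = w ! Suc j"
proof
  assume "Suc j < length w" "adj_swap j w = w"
  then have "adj_swap j w ! j = w ! j" by simp
  with \<open>Suc j < length w\<close> show "w ! j = w ! Suc j" by (simp add: nth_adj_swap)
next
  assume "Suc j < length w" "w ! j = w ! Suc j"
  then show "adj_swap j w = w" by (intro nth_equalityI) (auto simp: nth_adj_swap)
qed

lemma adj_interchange_sym: "adj_interchange u v \<Longrightarrow> adj_interchange v u"
  unfolding adj_interchange_def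
  by (metis adj_swap_invol length_adj_swap)

lemma adj_interchange_rev: "adj_interchange u v \<Longrightarrow> adj_interchange (rev u) (rev v)"
  unfolding adj_interchange_def
proof (elim exE conjE)
  fix j assume j: "Suc j < length u" "v = adj_swap j u"
  then have "rev v = adj_swap (length u - 2 - j) (rev u)" by (simp add: rev_adj_swap)
  moreover have "Suc (length u - 2 - j) < length (rev u)" using j by simp
  ultimately show "\<exists>j. Suc j < length (rev u) \<and> rev v = adj_swap j (rev u)" by blast
qed

definition gray :: "'a multiset \<Rightarrow> 'a list list \<Rightarrow> bool" where
  "gray M L \<longleftrightarrow> L \<noteq> [] \<and> distinct L \<and> set L = {w. mset w = M} \<and>
     (\<forall>i. Suc i < length L \<longrightarrow> adj_interchange (L ! i) (L ! Suc i))"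

lemma gray_length: "gray M L \<Longrightarrow> length L = card {w. mset w = M}"
  unfolding gray_def by (metis distinct_card)

lemma gray_rev: "gray M L \<Longrightarrow> gray M (rev L)"
  unfolding gray_def
proof (intro conjI allI impI; (elim conjE)?)
  fix i assume a: "L \<noteq> []" "distinct L" "set L = {w. mset w = M}"
    "\<forall>i. Suc i < length L \<longrightarrow> adj_interchange (L ! i) (L ! Suc i)" "Suc i < length (rev L)"
  let ?k = "length L - 2 - i"
  have "Suc ?k < length L" using a(5) by simp
  then have "adj_interchange (L ! ?k) (L ! Suc ?k)" using a(4) by blast
  then have "adj_interchange (L ! Suc ?k) (L ! ?k)" by (rule adj_interchange_sym)
  moreover have "rev L ! i = L ! Suc ?k" "rev L ! Suc i = L ! ?k"
    using a(5) by (auto simp: rev_nth Suc_diff_Suc)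
  ultimately show "adj_interchange (rev L ! i) (rev L ! Suc i)" by simp
qed auto

lemma gray_map_rev: "gray M L \<Longrightarrow> gray M (map rev L)"
  unfolding gray_def
proof (intro conjI allI impI; (elim conjE)?)
  assume "set L = {w. mset w = M}"
  then show "set (map rev L) = {w. mset w = M}"
  proof (intro equalityI subsetI)
    fix x assume "x \<in> set (map rev L)"
    then obtain w where "w \<in> set L" "x = rev w" by auto
    with \<open>set L = {w. mset w = M}\<close> show "x \<in> {w. mset w = M}" by simp
  next
    fix x assume "x \<in> {w. mset w = M}"
    then have "rev x \<in> set L" using \<open>set L = {w. mset w = M}\<close> by simp
    then show "x \<in> set (map rev L)" by (metis image_eqI rev_rev_ident set_map)
  qed
next
  assume "distinct L" then show "distinct (map rev L)"
    by (simp add: distinct_map)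
next
  fix i assume "\<forall>i. Suc i < length L \<longrightarrow> adj_interchange (L ! i) (L ! Suc i)"
    "Suc i < length (map rev L)"
  then show "adj_interchange (map rev L ! i) (map rev L ! Suc i)"
    by (simp add: adj_interchange_rev)
qed auto



section \<open>Merging a word into a pattern\<close>

fun merge :: "'a list \<Rightarrow> 'a option list \<Rightarrow> 'a list" where
  "merge ps [] = []"
| "merge ps (None # P) = hd ps # merge (tl ps) P"
| "merge ps (Some x # P) = x # merge ps P"

abbreviation cN :: "'a option list \<Rightarrow> nat" where "cN P \<equiv> count (mset P) None"

lemma length_merge[simp]: "length (merge p P) = length P"
  by (induction p P rule: merge.induct) auto

lemma merge_append_ps: "cN P \<le> length p \<Longrightarrow> merge (p @ q) P = merge p P"
  by (induction p P rule: merge.induct) (auto simp: hd_append tl_append split: list.splits)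

lemma merge_append: "merge p (P1 @ P2) = merge p P1 @ merge (drop (cN P1) p) P2"
  by (induction p P1 rule: merge.induct) (auto simp: drop_Suc)

lemma merge_map_Some[simp]: "merge p (map Some u) = u"
  by (induction u) auto

lemma merge_replicate_None: "n \<le> length p \<Longrightarrow> merge p (replicate n None) = take n p"
proof (induction n arbitrary: p)
  case 0 then show ?case by simp
next
  case (Suc n)
  then obtain a p' where "p = a # p'" by (cases p) auto
  with Suc show ?case by simp
qed

lemma cnt_Some[simp]: "count (image_mset Some M) None = 0"
  by (simp add: count_eq_zero_iff)

lemma merge_contig:
  "merge p (map Some u @ replicate (length p) None @ map Some v) = u @ p @ v"
  by (simp add: merge_append merge_replicate_None)

lemma mset_merge:
  "length p = cN P \<Longrightarrow> mset (merge p P) = mset p + mset (map the (filter (\<lambda>c. c \<noteq> None) P))"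
proof (induction p P rule: merge.induct)
  case (2 ps P)
  then obtain a p' where "ps = a # p'" by (cases ps) auto
  with 2 show ?case by simp
qed auto

lemma merge_extract:
  assumes "length p = cN P" "set p \<inter> X = {}" "\<forall>c\<in>set P. c \<noteq> None \<longrightarrow> the c \<in> X"
  shows "filter (\<lambda>c. c \<notin> X) (merge p P) = p \<and>
         map (\<lambda>c. if c \<in> X then Some c else None) (merge p P) = P"
  using assms
proof (induction p P rule: merge.induct)
  case (2 ps P)
  then obtain a p' where "ps = a # p'" by (cases ps) auto
  with 2 show ?case by auto
qed auto

lemma merge_reconstruct:
  "merge (filter (\<lambda>c. c \<notin> X) w) (map (\<lambda>c. if c \<in> X then Some c else None) w) = w"
  by (induction w) auto

lemma merge_adj_swap:
  "Suc j < length P \<Longrightarrow> \<not> (P ! j = None \<and> P ! Suc j = None) \<Longrightarrow>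
   merge p (adj_swap j P) = adj_swap j (merge p P)"
proof (induction P arbitrary: p j)
  case Nil then show ?case by simp
next
  case (Cons c P)
  show ?case
  proof (cases j)
    case 0
    with Cons.prems obtain d P' where P: "P = d # P'" by (cases P) auto
    show ?thesis using Cons.prems unfolding 0 P
      by (cases c; cases d) auto
  next
    case (Suc j')
    with Cons.prems have "Suc j' < length P" "\<not> (P ! j' = None \<and> P ! Suc j' = None)" by auto
    with Cons.IH show ?thesis unfolding Suc by (cases c) auto
  qed
qed

lemma merge_rev: "length p = cN P \<Longrightarrow> rev (merge p P) = merge (rev p) (rev P)"
proof (induction P arbitrary: p)
  case Nil then show ?case by simp
next
  case (Cons c P)
  show ?case
  proof (cases c)
    case None
    with Cons.prems obtain a p' where p: "p = a # p'" by (cases p) auto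
    with Cons.prems None have l: "length p' = cN P" by simp
    have "rev (merge p (c # P)) = rev (merge p' P) @ [a]" using None p by simp
    also have "\<dots> = merge (rev p') (rev P) @ [a]" using Cons.IH l by simp
    also have "\<dots> = merge (rev p' @ [a]) (rev P @ [None])"
      using l by (simp add: merge_append merge_append_ps)
    finally show ?thesis using None p by simp
  next
    case (Some x)
    then have "rev (merge p (c # P)) = merge (rev p) (rev P) @ [x]" using Cons by simp
    also have "\<dots> = merge (rev p) (rev P @ [Some x])"
      using Cons.prems Some by (simp add: merge_append)
    finally show ?thesis using Some by simp
  qed
qed

definition blocks :: "'a list list \<Rightarrow> (nat \<Rightarrow> 'a option list list) \<Rightarrow> 'a list list" where
  "blocks B T = concat (map (\<lambda>k. map (merge (B ! k)) (T k)) [0..<length B])"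

lemma concat_uniform:
  assumes "\<forall>k<n. length (f k) = q"
  shows "length (concat (map f [0..<n])) = n * q"
    and "k < n \<Longrightarrow> t < q \<Longrightarrow> concat (map f [0..<n]) ! (k * q + t) = f k ! t"
proof -
  have *: "length (concat (map f [0..<n])) = n * q \<and>
        (\<forall>k t. k < n \<longrightarrow> t < q \<longrightarrow> concat (map f [0..<n]) ! (k * q + t) = f k ! t)"
    using assms
  proof (induction n)
    case 0 then show ?case by simp
  next
    case (Suc n)
    then have IH: "length (concat (map f [0..<n])) = n * q"
      "\<forall>k t. k < n \<longrightarrow> t < q \<longrightarrow> concat (map f [0..<n]) ! (k * q + t) = f k ! t" by auto
    have l: "length (f n) = q" using Suc.prems by simp
    show ?case
    proof (intro conjI allI impI)
      show "length (concat (map f [0..<Suc n])) = Suc n * q" using IH l by simp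
    next
      fix k t assume kt: "k < Suc n" "t < q"
      show "concat (map f [0..<Suc n]) ! (k * q + t) = f k ! t"
      proof (cases "k < n")
        case True
        have "k * q + t < n * q"
        proof -
          have "Suc k \<le> n" using True by simp
          then have "Suc k * q \<le> n * q" by (rule mult_le_mono1)
          then show ?thesis using kt by simp
        qed
        then show ?thesis using IH True kt by (simp add: nth_append)
      next
        case False
        then have "k = n" using kt by simp
        then show ?thesis using IH kt by (simp add: nth_append)
      qed
    qed
  qed
  from * show "length (concat (map f [0..<n])) = n * q" by blast
  from * show "k < n \<Longrightarrow> t < q \<Longrightarrow> concat (map f [0..<n]) ! (k * q + t) = f k ! t" by blast
qed

definition patm :: "nat \<Rightarrow> 'a multiset \<Rightarrow> 'a option multiset" where
  "patm m Mx = replicate_mset m None + image_mset Some Mx"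

definition contig :: "nat \<Rightarrow> 'a option list \<Rightarrow> bool" where
  "contig m Z \<longleftrightarrow> (\<exists>u v. Z = map Some u @ replicate m None @ map Some v)"

lemma pat_props:
  assumes "mset P = patm m Mx"
  shows "cN P = m" "\<forall>c\<in>set P. c \<noteq> None \<longrightarrow> the c \<in># Mx"
    "mset (map the (filter (\<lambda>c. c \<noteq> None) P)) = Mx"
proof -
  show "cN P = m" using assms by (simp add: patm_def)
  show "\<forall>c\<in>set P. c \<noteq> None \<longrightarrow> the c \<in># Mx"
  proof (intro ballI impI)
    fix c assume "c \<in> set P" "c \<noteq> None"
    then have "c \<in># patm m Mx" using assms by (metis set_mset_mset)
    with \<open>c \<noteq> None\<close> show "the c \<in># Mx" by (auto simp: patm_def split: if_splits)
  qed
  have "mset (filter (\<lambda>c. c \<noteq> None) P) = filter_mset (\<lambda>c. c \<noteq> None) (patm m Mx)"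
    using assms by (simp add: mset_filter)
  also have "\<dots> = image_mset Some Mx"
    by (simp add: patm_def filter_mset_image_mset)
  finally show "mset (map the (filter (\<lambda>c. c \<noteq> None) P)) = Mx"
    by (simp add: multiset.map_comp)
qed



lemma blocks_nth:
  assumes "\<forall>k<length B. length (T k) = q"
  shows "length (blocks B T) = length B * q"
    and "k < length B \<Longrightarrow> t < q \<Longrightarrow> blocks B T ! (k * q + t) = merge (B ! k) (T k ! t)"
proof -
  have *: "\<forall>k<length B. length ((\<lambda>k. map (merge (B ! k)) (T k)) k) = q" using assms by simp
  show "length (blocks B T) = length B * q"
    unfolding blocks_def by (rule concat_uniform(1)[OF *])
  assume "k < length B" "t < q"
  then show "blocks B T ! (k * q + t) = merge (B ! k) (T k ! t)"
    unfolding blocks_def using concat_uniform(2)[OF *] assms by simp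
qed

lemma blocks_hd_last:
  assumes "B \<noteq> []" "\<forall>k<length B. T k \<noteq> []"
  shows "hd (blocks B T) = merge (hd B) (hd (T 0))"
    and "last (blocks B T) = merge (last B) (last (T (length B - 1)))"
proof -
  obtain n where n: "length B = Suc n" using assms(1) by (cases B) auto
  have ne: "\<forall>k<Suc n. map (merge (B ! k)) (T k) \<noteq> []" using assms(2) n by simp
  have "[0..<Suc n] = 0 # [1..<Suc n]" by (simp add: upt_rec)
  then have eq: "blocks B T = map (merge (B ! 0)) (T 0) @ concat (map (\<lambda>k. map (merge (B ! k)) (T k)) [1..<Suc n])"
    unfolding blocks_def n by (simp del: upt_Suc)
  have ne0: "map (merge (B ! 0)) (T 0) \<noteq> []" using ne by simp
  have "hd (blocks B T) = hd (map (merge (B ! 0)) (T 0))" using eq ne0 by (metis hd_append2)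
  also have "\<dots> = merge (B ! 0) (hd (T 0))" using ne0 by (simp add: hd_map)
  finally show "hd (blocks B T) = merge (hd B) (hd (T 0))" using assms(1) by (simp add: hd_conv_nth)
  have "blocks B T = concat (map (\<lambda>k. map (merge (B ! k)) (T k)) [0..<n]) @ map (merge (B ! n)) (T n)"
    unfolding blocks_def n by simp
  moreover have nen: "map (merge (B ! n)) (T n) \<noteq> []" using ne by simp
  ultimately have "last (blocks B T) = last (map (merge (B ! n)) (T n))" by (metis last_append)
  also have "\<dots> = merge (B ! n) (last (T n))" using nen by (simp add: last_map)
  finally show "last (blocks B T) = merge (last B) (last (T (length B - 1)))"
    using n assms(1) by (simp add: last_conv_nth)
qed

lemma div_mod_decomp:
  assumes "i < n * (q::nat)"
  shows "i div q < n" "i mod q < q" "i = (i div q) * q + i mod q"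
proof -
  from assms have q: "q > 0" by (cases q) auto
  show "i div q < n" using assms q by (simp add: div_less_iff_less_mult mult.commute)
  show "i mod q < q" using q by simp
  show "i = (i div q) * q + i mod q" by simp
qed

lemma blocks_gray:
  assumes B: "gray Mp B"
    and disj: "set_mset Mp \<inter> set_mset Mx = {}"
    and T: "\<forall>k<length B. gray (patm (size Mp) Mx) (T k)"
    and conn: "\<forall>k. Suc k < length B \<longrightarrow> last (T k) = hd (T (Suc k)) \<and> contig (size Mp) (last (T k))"
  shows "gray (Mp + Mx) (blocks B T)"
proof -
  define q where "q = card {P. mset P = patm (size Mp) Mx}"
  define L where "L = blocks B T"
  have lenT: "\<forall>k<length B. length (T k) = q" using T gray_length q_def by blast
  have Bne: "B \<noteq> []" and Bd: "distinct B" and Bset: "set B = {w. mset w = Mp}"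
    and Badj: "\<forall>i. Suc i < length B \<longrightarrow> adj_interchange (B ! i) (B ! Suc i)"
    using B unfolding gray_def by auto
  have Tne: "\<And>k. k < length B \<Longrightarrow> T k \<noteq> []" and Td: "\<And>k. k < length B \<Longrightarrow> distinct (T k)"
    and Tset: "\<And>k. k < length B \<Longrightarrow> set (T k) = {w. mset w = patm (size Mp) Mx}"
    and Tadj: "\<And>k i. k < length B \<Longrightarrow> Suc i < length (T k) \<Longrightarrow> adj_interchange (T k ! i) (T k ! Suc i)"
    using T unfolding gray_def by auto
  have q0: "q > 0" using Tne lenT Bne by (metis length_greater_0_conv)
  have lenL: "length L = length B * q" unfolding L_def by (rule blocks_nth(1)[OF lenT])
  have nthL: "\<And>k t. k < length B \<Longrightarrow> t < q \<Longrightarrow> L ! (k * q + t) = merge (B ! k) (T k ! t)"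
    unfolding L_def by (rule blocks_nth(2)[OF lenT])
  have msB: "\<And>k. k < length B \<Longrightarrow> mset (B ! k) = Mp" using Bset nth_mem by blast
  have lenB: "\<And>k. k < length B \<Longrightarrow> length (B ! k) = size Mp" using msB by (metis size_mset)
  have msT: "\<And>k t. k < length B \<Longrightarrow> t < q \<Longrightarrow> mset (T k ! t) = patm (size Mp) Mx"
  proof -
    fix k t assume a: "k < length B" "t < q"
    then have "T k ! t \<in> set (T k)" using lenT by simp
    then show "mset (T k ! t) = patm (size Mp) Mx" using Tset[OF a(1)] by simp
  qed
  have ext: "filter (\<lambda>c. c \<notin> set_mset Mx) (merge (B ! k) (T k ! t)) = B ! k \<and>
      map (\<lambda>c. if c \<in> set_mset Mx then Some c else None) (merge (B ! k) (T k ! t)) = T k ! t"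
    if "k < length B" "t < q" for k t
  proof (rule merge_extract)
    show "length (B ! k) = cN (T k ! t)" using pat_props(1)[OF msT[OF that]] lenB[OF that(1)] by simp
    have "set (B ! k) = set_mset Mp" using msB[OF that(1)] by (metis set_mset_mset)
    then show "set (B ! k) \<inter> set_mset Mx = {}" using disj by simp
    show "\<forall>c\<in>set (T k ! t). c \<noteq> None \<longrightarrow> the c \<in> set_mset Mx"
      using pat_props(2)[OF msT[OF that]] by simp
  qed
  have inj: "k = k' \<and> t = t'" if "k < length B" "t < q" "k' < length B" "t' < q"
    "merge (B ! k) (T k ! t) = merge (B ! k') (T k' ! t')" for k t k' t'
  proof -
    have "B ! k = B ! k'" using ext[OF that(1,2)] ext[OF that(3,4)] that(5) by metis
    then have kk: "k = k'" using Bd that by (simp add: nth_eq_iff_index_eq)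
    have "T k ! t = T k ! t'" using ext[OF that(1,2)] ext[OF that(3,4)] that(5) kk by metis
    then have "t = t'" using Td[OF that(1)] that lenT by (simp add: nth_eq_iff_index_eq)
    with kk show ?thesis by simp
  qed
  have dist: "distinct L"
  proof (subst distinct_conv_nth, intro allI impI)
    fix i j assume ij: "i < length L" "j < length L" "i \<noteq> j"
    show "L ! i \<noteq> L ! j"
    proof
      assume eq: "L ! i = L ! j"
      note di = div_mod_decomp[OF ij(1)[unfolded lenL]]
      note dj = div_mod_decomp[OF ij(2)[unfolded lenL]]
      have "merge (B ! (i div q)) (T (i div q) ! (i mod q)) = merge (B ! (j div q)) (T (j div q) ! (j mod q))"
        using eq nthL di dj by metis
      then have "i div q = j div q \<and> i mod q = j mod q" using inj di dj by blast
      then have "i = j" using di(3) dj(3) by metis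
      with ij show False by simp
    qed
  qed
  have set1: "set L \<subseteq> {w. mset w = Mp + Mx}"
  proof
    fix w assume "w \<in> set L"
    then obtain i where i: "i < length L" "w = L ! i" by (metis in_set_conv_nth)
    note d = div_mod_decomp[OF i(1)[unfolded lenL]]
    have w: "w = merge (B ! (i div q)) (T (i div q) ! (i mod q))" using i nthL d by metis
    have "mset w = mset (B ! (i div q)) + Mx"
      unfolding w using pat_props[OF msT[OF d(1,2)]] lenB[OF d(1)] by (simp add: mset_merge)
    then show "w \<in> {w. mset w = Mp + Mx}" using msB[OF d(1)] by simp
  qed
  have set2: "{w. mset w = Mp + Mx} \<subseteq> set L"
  proof
    fix w assume "w \<in> {w. mset w = Mp + Mx}"
    then have w: "mset w = Mp + Mx" by simp
    define p where "p = filter (\<lambda>c. c \<notin> set_mset Mx) w"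
    define P where "P = map (\<lambda>c. if c \<in> set_mset Mx then Some c else None) w"
    have "mset p = filter_mset (\<lambda>c. c \<notin># Mx) Mp + filter_mset (\<lambda>c. c \<notin># Mx) Mx"
      unfolding p_def by (simp add: mset_filter w)
    also have "filter_mset (\<lambda>c. c \<notin># Mx) Mp = Mp"
    proof -
      have "filter_mset (\<lambda>c. c \<notin># Mx) Mp = filter_mset (\<lambda>c. True) Mp"
        using disj by (intro filter_mset_cong0) auto
      then show ?thesis by simp
    qed
    also have "filter_mset (\<lambda>c. c \<notin># Mx) Mx = {#}"
      by simp
    finally have mp: "mset p = Mp" by simp
    have "mset P = image_mset (\<lambda>c. if c \<in># Mx then Some c else None) Mp +
                   image_mset (\<lambda>c. if c \<in># Mx then Some c else None) Mx"
      unfolding P_def by (simp add: w)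
    also have "image_mset (\<lambda>c. if c \<in># Mx then Some c else None) Mp = image_mset (\<lambda>_. None) Mp"
      using disj by (intro image_mset_cong) auto
    also have "\<dots> = replicate_mset (size Mp) None" by (simp add: image_mset_const_eq)
    also have "image_mset (\<lambda>c. if c \<in># Mx then Some c else None) Mx = image_mset Some Mx"
      by (intro image_mset_cong) auto
    finally have mP: "mset P = patm (size Mp) Mx" by (simp add: patm_def)
    have "p \<in> set B" using mp Bset by simp
    then obtain k where k: "k < length B" "p = B ! k" by (auto simp: in_set_conv_nth)
    have "P \<in> set (T k)" using mP Tset[OF k(1)] by simp
    then obtain t where t: "t < length (T k)" "P = T k ! t" by (auto simp: in_set_conv_nth)
    have tq: "t < q" using t lenT k by simp
    have "w = merge p P" unfolding p_def P_def by (simp add: merge_reconstruct)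
    also have "\<dots> = L ! (k * q + t)" using nthL k t tq by simp
    finally have wL: "w = L ! (k * q + t)" .
    show "w \<in> set L"
    proof -
      have "k * q + t < length B * q"
      proof -
        have "Suc k \<le> length B" using k by simp
        then have "Suc k * q \<le> length B * q" by (rule mult_le_mono1)
        then show ?thesis using tq by simp
      qed
      then show ?thesis using wL lenL by simp
    qed
  qed
  have adj: "adj_interchange (L ! i) (L ! Suc i)" if si: "Suc i < length L" for i
  proof -
    have il: "i < length L" using si by simp
    note d = div_mod_decomp[OF il[unfolded lenL]]
    define k where "k = i div q"
    define t where "t = i mod q"
    have k: "k < length B" and t: "t < q" and i: "i = k * q + t" using d unfolding k_def t_def by auto
    show ?thesis
    proof (cases "Suc t < q")
      case True
      have Li: "L ! i = merge (B ! k) (T k ! t)" using nthL k t i by simp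
      have LSi: "L ! Suc i = merge (B ! k) (T k ! Suc t)" using nthL k True i by (metis add_Suc_right)
      have "adj_interchange (T k ! t) (T k ! Suc t)" using Tadj k True lenT by simp
      then obtain j where j: "Suc j < length (T k ! t)" "T k ! Suc t = adj_swap j (T k ! t)"
        unfolding adj_interchange_def by blast
      have "T k ! Suc t \<noteq> T k ! t" using Td[OF k] True lenT k by (simp add: nth_eq_iff_index_eq)
      then have "(T k ! t) ! j \<noteq> (T k ! t) ! Suc j" using j adj_swap_same by metis
      then have "merge (B ! k) (T k ! Suc t) = adj_swap j (merge (B ! k) (T k ! t))"
        using j merge_adj_swap by metis
      then show ?thesis unfolding Li LSi adj_interchange_def using j by auto
    next
      case False
      then have tq: "Suc t = q" using t by simp
      have Sk: "Suc k < length B"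
      proof (rule ccontr)
        assume "\<not> Suc k < length B"
        then have "length B = Suc k" using k by simp
        then have "length L = k * q + q" using lenL by simp
        then show False using si i tq by simp
      qed
      have "t = q - Suc 0" using tq by simp
      then have "last (T k) = T k ! t"
        using lenT k Tne[OF k] by (simp add: last_conv_nth)
      then have Li: "L ! i = merge (B ! k) (last (T k))"
        using nthL[OF k t] i by simp
      have si': "Suc i = Suc k * q + 0" using i tq by simp
      have "L ! Suc i = L ! (Suc k * q + 0)" by (subst si') (rule refl)
      also have "\<dots> = merge (B ! Suc k) (T (Suc k) ! 0)" by (rule nthL[OF Sk q0])
      also have "\<dots> = merge (B ! Suc k) (hd (T (Suc k)))" using Tne[OF Sk] by (simp add: hd_conv_nth)
      finally have LSi: "L ! Suc i = merge (B ! Suc k) (hd (T (Suc k)))" .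
      from conn Sk obtain u v where Z: "last (T k) = hd (T (Suc k))"
        "last (T k) = map Some u @ replicate (size Mp) None @ map Some v"
        unfolding contig_def by blast
      have e1: "merge (B ! k) (last (T k)) = u @ B ! k @ v"
        using Z(2) lenB[OF k] merge_contig by metis
      have e2: "merge (B ! Suc k) (hd (T (Suc k))) = u @ B ! Suc k @ v"
        using Z lenB[OF Sk] merge_contig by metis
      obtain s where s: "Suc s < length (B ! k)" "B ! Suc k = adj_swap s (B ! k)"
        using Badj Sk unfolding adj_interchange_def by blast
      have "u @ B ! Suc k @ v = adj_swap (length u + s) (u @ B ! k @ v)"
        using s by (simp add: adj_swap_append_left adj_swap_append_right)
      moreover have "Suc (length u + s) < length (u @ B ! k @ v)" using s by simp
      ultimately show ?thesis unfolding Li LSi e1 e2 adj_interchange_def by blast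
    qed
  qed
  have "length B > 0" using Bne by simp
  then have "length L > 0" using lenL q0 by simp
  then have "L \<noteq> []" by simp
  then show ?thesis unfolding gray_def L_def[symmetric] using dist set1 set2 adj by blast
qed



section \<open>One letter moving through blanks\<close>

definition up :: "nat \<Rightarrow> 'a \<Rightarrow> 'a option list list" where
  "up l x = map (\<lambda>i. replicate i None @ Some x # replicate (l - i) None) [0..<Suc l]"

lemma card_words_replicate: "card {w. mset w = replicate_mset l a} = 1"
proof -
  have "{w. mset w = replicate_mset l a} = {replicate l a}"
  proof (intro equalityI subsetI)
    fix w assume "w \<in> {w. mset w = replicate_mset l a}"
    then have w: "mset w = replicate_mset l a" by simp
    then have "length w = l" by (metis size_mset size_replicate_mset)
    moreover have "\<forall>c\<in>set w. c = a" using w by (metis set_mset_mset set_mset_replicate_mset_subset singletonD empty_iff)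
    ultimately show "w \<in> {replicate l a}" by (simp add: replicate_eqI)
  qed simp
  then show ?thesis by simp
qed

lemma card_words_add: "count A x = 0 \<Longrightarrow>
  card {w. mset w = A + {#x#}} = Suc (size A) * card {w. mset w = A}"
  using card_permutations_of_multiset_insert_aux[of A x]
  by (simp add: permutations_of_multiset_def)

lemma rep_mset_add: "replicate_mset (a + b) x = replicate_mset a x + replicate_mset b x"
  by (induction a) auto

lemma up_nth_elem: "k \<le> l \<Longrightarrow> i \<le> l \<Longrightarrow>
  (replicate i None @ Some x # replicate (l - i) None) ! k = (if k = i then Some x else None)"
  by (auto simp: nth_append nth_Cons' split: if_splits)

lemma up_length: "length (up l x) = Suc l" by (simp add: up_def)

lemma gray_up: "gray (patm l {#x#}) (up l x)"
proof -
  define f where "f i = replicate i None @ Some x # replicate (l - i) None" for i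
  have upf: "up l x = map f [0..<Suc l]" unfolding up_def f_def by simp
  have inj: "inj_on f {0..<Suc l}"
  proof (rule inj_onI)
    fix i j assume ij: "i \<in> {0..<Suc l}" "j \<in> {0..<Suc l}" "f i = f j"
    then have "f i ! i = f j ! i" by simp
    moreover have "f i ! i = Some x" using ij(1) unfolding f_def by (simp add: up_nth_elem)
    moreover have "f j ! i = (if i = j then Some x else None)"
      using ij(1,2) unfolding f_def by (intro up_nth_elem) auto
    ultimately show "i = j" by (auto split: if_splits)
  qed
  have dist: "distinct (up l x)" unfolding upf distinct_map using inj by (simp del: upt_Suc)
  have ms: "mset (f i) = patm l {#x#}" if "i \<le> l" for i
  proof -
    have "mset (f i) = replicate_mset i None + replicate_mset (l - i) None + {#Some x#}"
      unfolding f_def by simp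
    also have "replicate_mset i None + replicate_mset (l - i) None = replicate_mset l None"
      using that by (simp flip: rep_mset_add)
    finally show ?thesis by (simp add: patm_def)
  qed
  have sub: "set (up l x) \<subseteq> {w. mset w = patm l {#x#}}" unfolding upf using ms by auto
  have cw: "card {w. mset w = patm l {#x#}} = Suc l"
    unfolding patm_def using card_words_add[of "replicate_mset l None" "Some x"]
    by (simp add: card_words_replicate)
  have "card (set (up l x)) = Suc l" using distinct_card[OF dist] by (simp add: up_length)
  then have seq: "set (up l x) = {w. mset w = patm l {#x#}}"
    using sub cw by (intro card_subset_eq) (auto simp: permutations_of_multiset_def[symmetric])
  have adj: "adj_interchange (up l x ! i) (up l x ! Suc i)" if "Suc i < length (up l x)" for i
  proof -
    have i: "i < l" using that by (simp add: up_def)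
    have e1: "up l x ! i = replicate i None @ Some x # None # replicate (l - Suc i) None"
    proof -
      have li: "l - i = Suc (l - Suc i)" using i by simp
      show ?thesis using i by (simp add: up_def li del: upt_Suc)
    qed
    have e2: "up l x ! Suc i = replicate i None @ None # Some x # replicate (l - Suc i) None"
      using i by (simp add: up_def f_def replicate_append_same del: upt_Suc)
    have "up l x ! Suc i = adj_swap (length (replicate i (None :: 'a option)) + 0) (up l x ! i)"
      unfolding e1 e2 adj_swap_append_left by simp
    moreover have "Suc i < length (up l x ! i)" using e1 i by simp
    ultimately show ?thesis unfolding adj_interchange_def by auto
  qed
  show ?thesis unfolding gray_def using dist seq adj by (simp add: up_def)
qed

lemma up_hd: "hd (up l x) = Some x # replicate l None"
  by (simp add: up_def hd_map del: upt_Suc)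

lemma up_last: "last (up l x) = replicate l None @ [Some x]"
  by (simp add: up_def last_map del: upt_Suc)

definition sweep :: "'a \<Rightarrow> bool \<Rightarrow> 'a list list \<Rightarrow> 'a list list" where
  "sweep x s P = blocks P (\<lambda>k. if even k = s then up (length (hd P)) x else rev (up (length (hd P)) x))"

lemma gray_hd_length: "gray M P \<Longrightarrow> length (hd P) = size M"
  unfolding gray_def by (metis hd_in_set mem_Collect_eq size_mset)

lemma gray_sweep:
  assumes P: "gray M P" and x: "x \<notin># M"
  shows "gray (M + {#x#}) (sweep x s P)"
  unfolding sweep_def
proof (rule blocks_gray[OF P])
  show "set_mset M \<inter> set_mset {#x#} = {}" using x by simp
  have l: "length (hd P) = size M" by (rule gray_hd_length[OF P])
  show "\<forall>k<length P. gray (patm (size M) {#x#})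
      (if even k = s then up (length (hd P)) x else rev (up (length (hd P)) x))"
    unfolding l by (simp add: gray_up gray_rev)
  show "\<forall>k. Suc k < length P \<longrightarrow>
    last (if even k = s then up (length (hd P)) x else rev (up (length (hd P)) x)) =
    hd (if even (Suc k) = s then up (length (hd P)) x else rev (up (length (hd P)) x)) \<and>
    contig (size M) (last (if even k = s then up (length (hd P)) x else rev (up (length (hd P)) x)))"
  proof (intro allI impI conjI)
    fix k
    have ne: "up (size M) x \<noteq> []" by (simp add: up_def)
    show "last (if even k = s then up (length (hd P)) x else rev (up (length (hd P)) x)) =
      hd (if even (Suc k) = s then up (length (hd P)) x else rev (up (length (hd P)) x))"
      unfolding l using ne by (auto simp: hd_rev last_rev)
    have c1: "contig (size M) (replicate (size M) None @ [Some x])"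
      unfolding contig_def by (rule exI[of _ "[]"], rule exI[of _ "[x]"]) simp
    have c2: "contig (size M) (Some x # replicate (size M) None)"
      unfolding contig_def by (rule exI[of _ "[x]"], rule exI[of _ "[]"]) simp
    show "contig (size M) (last (if even k = s then up (length (hd P)) x else rev (up (length (hd P)) x)))"
      unfolding l using c1 c2 ne by (auto simp: last_rev up_hd up_last)
  qed
qed

lemma sweep_length: "gray M P \<Longrightarrow> length (sweep x s P) = length P * Suc (size M)"
  unfolding sweep_def
  by (subst blocks_nth(1)[where q = "Suc (size M)"]) (auto simp: up_length gray_hd_length)

lemma sweep_hd: "gray M P \<Longrightarrow> hd (sweep x s P) = (if s then x # hd P else hd P @ [x])"
proof -
  assume P: "gray M P"
  have ne: "P \<noteq> []" using P by (simp add: gray_def)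
  have upne: "up l x \<noteq> []" for l by (simp add: up_def)
  have "hd (sweep x s P) = merge (hd P) (hd (if s then up (length (hd P)) x else rev (up (length (hd P)) x)))"
    unfolding sweep_def using blocks_hd_last(1)[OF ne] upne by simp
  also have "\<dots> = (if s then x # hd P else hd P @ [x])"
  proof (cases s)
    case True
    have "merge (hd P) (map Some [x] @ replicate (length (hd P)) None @ map Some []) = [x] @ hd P @ []"
      by (rule merge_contig)
    then show ?thesis using True by (simp add: up_hd)
  next
    case False
    have "merge (hd P) (map Some [] @ replicate (length (hd P)) None @ map Some [x]) = [] @ hd P @ [x]"
      by (rule merge_contig)
    then show ?thesis using False upne by (simp add: hd_rev up_last)
  qed
  finally show ?thesis .
qed

lemma sweep_last: "gray M P \<Longrightarrow>
  last (sweep x s P) = (if s = even (length P) then x # last P else last P @ [x])"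
proof -
  assume P: "gray M P"
  have ne: "P \<noteq> []" using P by (simp add: gray_def)
  have upne: "up l x \<noteq> []" for l by (simp add: up_def)
  have lh: "length (last P) = length (hd P)"
    using P ne unfolding gray_def by (metis hd_in_set last_in_set mem_Collect_eq size_mset)
  define n where "n = length P - 1"
  have evn: "even n = (\<not> even (length P))" using ne unfolding n_def by (cases P) auto
  have "last (sweep x s P) = merge (last P) (last (if even n = s then up (length (hd P)) x else rev (up (length (hd P)) x)))"
    unfolding sweep_def n_def using blocks_hd_last(2)[OF ne] upne by simp
  also have "\<dots> = (if s = even (length P) then x # last P else last P @ [x])"
  proof (cases "even n = s")
    case True
    have "merge (last P) (map Some [] @ replicate (length (last P)) None @ map Some [x]) = [] @ last P @ [x]"
      by (rule merge_contig)
    then show ?thesis using True evn lh by (auto simp: up_last)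
  next
    case False
    have "merge (last P) (map Some [x] @ replicate (length (last P)) None @ map Some []) = [x] @ last P @ []"
      by (rule merge_contig)
    then show ?thesis using False evn lh upne by (auto simp: last_rev up_hd)
  qed
  finally show ?thesis .
qed



section \<open>Two letters: the core path\<close>

definition wd :: "nat \<Rightarrow> nat \<Rightarrow> nat \<Rightarrow> 'a \<Rightarrow> 'a \<Rightarrow> 'a option list" where
  "wd m x y u v = replicate x None @ Some u # replicate (y - x - 1) None @ Some v # replicate (m + 1 - y) None"

lemma length_wd: "x < y \<Longrightarrow> y \<le> m + 1 \<Longrightarrow> length (wd m x y u v) = m + 2"
  by (simp add: wd_def)

lemma nth_wd: "x < y \<Longrightarrow> y \<le> m + 1 \<Longrightarrow> k < m + 2 \<Longrightarrow>
  wd m x y u v ! k = (if k = x then Some u else if k = y then Some v else None)"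
  by (auto simp: wd_def nth_append nth_Cons' split: if_splits)

lemma mset_wd: "x < y \<Longrightarrow> y \<le> m + 1 \<Longrightarrow>
  mset (wd m x y u v) = replicate_mset m None + {#Some u, Some v#}"
proof -
  assume a: "x < y" "y \<le> m + 1"
  have "mset (wd m x y u v) = replicate_mset (x + (y - x - 1) + (m + 1 - y)) None + {#Some u, Some v#}"
    by (simp add: wd_def rep_mset_add)
  also have "x + (y - x - 1) + (m + 1 - y) = m" using a by simp
  finally show ?thesis .
qed

lemma wd_inj:
  assumes "x < y" "y \<le> m + 1" "x' < y'" "y' \<le> m + 1" "u \<noteq> v" "u' \<noteq> v'"
    and eq: "wd m x y u v = wd m x' y' u' v'"
  shows "x = x' \<and> y = y' \<and> u = u' \<and> v = v'"
proof -
  have 1: "(if k = x then Some u else if k = y then Some v else None) =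
           (if k = x' then Some u' else if k = y' then Some v' else None)" if "k < m + 2" for k
  proof -
    have a: "wd m x y u v ! k = (if k = x then Some u else if k = y then Some v else None)"
      by (rule nth_wd[OF assms(1,2) that])
    have b: "wd m x' y' u' v' ! k = (if k = x' then Some u' else if k = y' then Some v' else None)"
      by (rule nth_wd[OF assms(3,4) that])
    have c: "wd m x y u v ! k = wd m x' y' u' v' ! k" by (simp only: eq)
    show ?thesis using c unfolding a b .
  qed
  have kx: "x < m + 2" "y < m + 2" "x' < m + 2" "y' < m + 2" using assms by auto
  have ex: "x = x' \<or> x = y'" using 1[OF kx(1)] by (auto split: if_split_asm)
  have ey: "y = x' \<or> y = y'" using 1[OF kx(2)] assms(1) by (auto split: if_split_asm)
  have ex': "x' = x \<or> x' = y" using 1[OF kx(3)] by (auto split: if_split_asm)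
  have ey': "y' = x \<or> y' = y" using 1[OF kx(4)] assms(3) by (auto split: if_split_asm)
  have xx: "x = x'" and yy: "y = y'" using ex ey ex' ey' assms(1,3) by auto
  have "u = u'" using 1[OF kx(1)] xx by simp
  moreover have "v = v'" using 1[OF kx(2)] xx yy assms(1) by simp
  ultimately show ?thesis using xx yy by simp
qed

lemma wd_step: "Suc x < y \<Longrightarrow> y \<le> m + 1 \<Longrightarrow> wd m (Suc x) y u v = adj_swap x (wd m x y u v)"
  by (rule nth_equalityI) (auto simp: length_wd nth_wd nth_adj_swap)

lemma wd_flip: "Suc x = y \<Longrightarrow> y \<le> m + 1 \<Longrightarrow> wd m x y v u = adj_swap x (wd m x y u v)"
  by (rule nth_equalityI) (auto simp: length_wd nth_wd nth_adj_swap)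

lemma wd_ext: "x < y \<Longrightarrow> Suc y \<le> m + 1 \<Longrightarrow> wd m x (Suc y) u v = adj_swap y (wd m x y u v)"
  by (rule nth_equalityI) (auto simp: length_wd nth_wd nth_adj_swap)

lemma adjI: "v = adj_swap j u \<Longrightarrow> Suc j < length u \<Longrightarrow> adj_interchange u v"
  unfolding adj_interchange_def by blast

definition phase :: "nat \<Rightarrow> nat \<Rightarrow> 'a \<Rightarrow> 'a \<Rightarrow> 'a option list list" where
  "phase m y u v = map (\<lambda>x. wd m x y u v) [0..<y] @ map (\<lambda>x. wd m x y v u) (rev [0..<y])"

definition Cc :: "nat \<Rightarrow> 'a \<Rightarrow> 'a \<Rightarrow> 'a option list list" where
  "Cc m a b = concat (map (\<lambda>y. if odd y then phase m y b a else phase m y a b) [1..<m + 2])"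

lemma length_phase: "length (phase m y u v) = 2 * y"
  by (simp add: phase_def)

lemma successively_upt: "(\<And>i. Suc i < n \<Longrightarrow> P i (Suc i)) \<Longrightarrow> successively P [0..<n]"
  by (simp add: successively_conv_nth)

lemma phase_succ:
  assumes "0 < y" "y \<le> m + 1"
  shows "successively adj_interchange (phase m y u v)"
proof -
  have st: "adj_interchange (wd m i y u' v') (wd m (Suc i) y u' v')" if "Suc i < y" for i and u' v' :: 'a
  proof -
    have "wd m (Suc i) y u' v' = adj_swap i (wd m i y u' v')" using that assms by (intro wd_step) auto
    moreover have "Suc i < length (wd m i y u' v')" using that assms by (simp add: length_wd)
    ultimately show ?thesis by (rule adjI)
  qed
  have s1: "successively adj_interchange (map (\<lambda>x. wd m x y u v) [0..<y])"
    unfolding successively_map by (rule successively_upt) (rule st)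
  have s2: "successively adj_interchange (map (\<lambda>x. wd m x y v u) (rev [0..<y]))"
    unfolding successively_map successively_rev
    by (rule successively_upt) (rule adj_interchange_sym, rule st)
  obtain y' where y': "y = Suc y'" using assms by (cases y) auto
  have j: "adj_interchange (wd m y' y u v) (wd m y' y v u)"
  proof (rule adjI)
    show "wd m y' y v u = adj_swap y' (wd m y' y u v)" using assms y' by (intro wd_flip) auto
    show "Suc y' < length (wd m y' y u v)" using assms y' by (simp add: length_wd)
  qed
  show ?thesis unfolding phase_def successively_append_iff
    using s1 s2 j y' by (simp add: last_map hd_map hd_rev del: upt_Suc)
qed

lemma phase_hd: "0 < y \<Longrightarrow> hd (phase m y u v) = wd m 0 y u v"
  by (simp add: phase_def hd_map)

lemma phase_last: "0 < y \<Longrightarrow> last (phase m y u v) = wd m 0 y v u"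
  by (simp add: phase_def last_map last_rev hd_upt del: upt_Suc)

lemma successively_concat_upt:
  assumes "\<And>y. 1 \<le> y \<Longrightarrow> y \<le> n \<Longrightarrow> F y \<noteq> [] \<and> successively R (F y)"
    and "\<And>y. 1 \<le> y \<Longrightarrow> y < n \<Longrightarrow> R (last (F y)) (hd (F (Suc y)))"
  shows "successively R (concat (map F [1..<Suc n]))"
  using assms
proof (induction n)
  case 0 then show ?case by simp
next
  case (Suc n)
  have IH: "successively R (concat (map F [1..<Suc n]))" using Suc by simp
  have l: "n \<ge> 1 \<Longrightarrow> last (concat (map F [1..<Suc n])) = last (F n)"
  proof -
    assume "n \<ge> 1"
    then have "[1..<Suc n] = [1..<n] @ [n]" by simp
    moreover have "F n \<noteq> []" using Suc.prems(1) \<open>n \<ge> 1\<close> by simp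
    ultimately show ?thesis by simp
  qed
  have "concat (map F [1..<Suc (Suc n)]) = concat (map F [1..<Suc n]) @ F (Suc n)" by simp
  moreover have "successively R (F (Suc n))" using Suc.prems(1) by simp
  moreover have "concat (map F [1..<Suc n]) = [] \<or> F (Suc n) = [] \<or>
      R (last (concat (map F [1..<Suc n]))) (hd (F (Suc n)))"
  proof (cases "n \<ge> 1")
    case True then show ?thesis using l Suc.prems(2)[of n] by simp
  next
    case False then show ?thesis by simp
  qed
  ultimately show ?case using IH by (simp only: successively_append_iff)
qed

lemma length_concat_upt:
  assumes "\<And>y. length (F y) = 2 * y"
  shows "length (concat (map F [1..<Suc n])) = n * Suc n"
  by (induction n) (simp_all add: assms)

lemma gray_Cc:
  assumes ab: "a \<noteq> b" and m: "even m"
  shows "gray (patm m {#a, b#}) (Cc m a b)"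
    and "hd (Cc m a b) = [Some b, Some a] @ replicate m None"
    and "last (Cc m a b) = Some a # replicate m None @ [Some b]"
proof -
  define G where "G y = (if odd y then phase m y b a else phase m y a b)" for y
  have C: "Cc m a b = concat (map G [1..<Suc (m + 1)])" unfolding Cc_def G_def by simp
  have lenG: "length (G y) = 2 * y" for y unfolding G_def by (simp add: length_phase)
  have len: "length (Cc m a b) = (m + 1) * (m + 2)"
    unfolding C by (subst length_concat_upt[of G]) (simp_all add: lenG)
  have memG: "\<exists>x u v. w = wd m x y u v \<and> x < y \<and> {u, v} = {a, b} \<and> u \<noteq> v" if "w \<in> set (G y)" for w y
  proof -
    have "\<exists>x<y. w = wd m x y a b \<or> w = wd m x y b a"
      using that unfolding G_def phase_def by (auto split: if_splits)
    then obtain x where x: "x < y" "w = wd m x y a b \<or> w = wd m x y b a" by blast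
    show ?thesis
    proof (cases "w = wd m x y a b")
      case True then show ?thesis using x ab by blast
    next
      case False
      then have "w = wd m x y b a" using x by simp
      moreover have "{b, a} = {a, b}" by (rule insert_commute)
      ultimately show ?thesis using x ab by blast
    qed
  qed
  have memC: "\<exists>x y u v. w = wd m x y u v \<and> x < y \<and> y \<le> m + 1 \<and> {u, v} = {a, b} \<and> u \<noteq> v"
    if "w \<in> set (Cc m a b)" for w
  proof -
    have "\<exists>y\<in>set [1..<Suc (m + 1)]. w \<in> set (G y)" using that unfolding C set_concat set_map by blast
    then obtain y where y: "y \<in> set [1..<Suc (m + 1)]" "w \<in> set (G y)" by blast
    then have yl: "y \<le> m + 1" by auto
    from memG[OF y(2)] yl show ?thesis by blast
  qed
  have sub: "set (Cc m a b) \<subseteq> {w. mset w = patm m {#a, b#}}"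
  proof
    fix w assume "w \<in> set (Cc m a b)"
    then obtain x y u v where w: "w = wd m x y u v" "x < y" "y \<le> m + 1" "{u, v} = {a, b}" "u \<noteq> v"
      using memC by blast
    have "{#Some u, Some v#} = {#Some a, Some b#}" using w(4,5) ab
      by (auto simp: doubleton_eq_iff add_mset_commute)
    then show "w \<in> {w. mset w = patm m {#a, b#}}" using w by (simp add: mset_wd patm_def)
  qed
  have distG: "distinct (G y)" if "1 \<le> y" "y \<le> m + 1" for y
  proof -
    have d: "distinct (map (\<lambda>x. wd m x y u v) [0..<y] @ map (\<lambda>x. wd m x y v u) (rev [0..<y]))"
      if uv: "u \<noteq> v" for u v :: 'a
    proof -
      have i1: "inj_on (\<lambda>x. wd m x y u v) {0..<y}"
      proof (rule inj_onI)
        fix x1 x2 assume "x1 \<in> {0..<y}" "x2 \<in> {0..<y}" "wd m x1 y u v = wd m x2 y u v"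
        then show "x1 = x2" using wd_inj[of x1 y m x2 y u v u v] \<open>y \<le> m + 1\<close> uv by auto
      qed
      have i2: "inj_on (\<lambda>x. wd m x y v u) {0..<y}"
      proof (rule inj_onI)
        fix x1 x2 assume "x1 \<in> {0..<y}" "x2 \<in> {0..<y}" "wd m x1 y v u = wd m x2 y v u"
        then show "x1 = x2" using wd_inj[of x1 y m x2 y v u v u] \<open>y \<le> m + 1\<close> uv by auto
      qed
      have dj: "wd m x y u v \<noteq> wd m x' y v u" if "x < y" "x' < y" for x x'
        using wd_inj[of x y m x' y u v v u] that \<open>y \<le> m + 1\<close> uv by auto
      show ?thesis using i1 i2 dj by (auto simp: distinct_map)
    qed
    show ?thesis unfolding G_def phase_def using d ab by simp
  qed
  have dist: "distinct (Cc m a b)"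
    unfolding C
  proof (rule distinct_concat)
    show "distinct (map G [1..<Suc (m + 1)])"
    proof (subst distinct_map, intro conjI)
      show "inj_on G (set [1..<Suc (m + 1)])"
        by (rule inj_onI) (metis lenG mult_left_cancel zero_neq_numeral)
    qed simp
    show "\<And>ys. ys \<in> set (map G [1..<Suc (m + 1)]) \<Longrightarrow> distinct ys" using distG by auto
    show "\<And>ys zs. ys \<in> set (map G [1..<Suc (m + 1)]) \<Longrightarrow> zs \<in> set (map G [1..<Suc (m + 1)]) \<Longrightarrow>
         ys \<noteq> zs \<Longrightarrow> set ys \<inter> set zs = {}"
    proof -
      fix ys zs assume a: "ys \<in> set (map G [1..<Suc (m + 1)])" "zs \<in> set (map G [1..<Suc (m + 1)])" "ys \<noteq> zs"
      then obtain y z where yz: "ys = G y" "zs = G z" "y \<in> {1..m+1}" "z \<in> {1..m+1}" by auto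
      have "y \<noteq> z" using a yz by auto
      show "set ys \<inter> set zs = {}"
      proof (rule ccontr)
        assume "set ys \<inter> set zs \<noteq> {}"
        then obtain w where w: "w \<in> set (G y)" "w \<in> set (G z)" using yz by auto
        obtain x1 u1 v1 where 1: "w = wd m x1 y u1 v1" "x1 < y" "u1 \<noteq> v1" using memG[OF w(1)] by blast
        obtain x2 u2 v2 where 2: "w = wd m x2 z u2 v2" "x2 < z" "u2 \<noteq> v2" using memG[OF w(2)] by blast
        have "y = z" using wd_inj[of x1 y m x2 z u1 v1 u2 v2] 1 2 yz by auto
        with \<open>y \<noteq> z\<close> show False by simp
      qed
    qed
  qed
  have cw: "card {w. mset w = patm m {#a, b#}} = (m + 2) * (m + 1)"
  proof -
    have e: "patm m {#a, b#} = (replicate_mset m None + {#Some a#}) + {#Some b#}"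
      by (simp add: patm_def)
    have "card {w. mset w = (replicate_mset m None + {#Some a#}) + {#Some b#}} =
          Suc (size (replicate_mset m None + {#Some a#})) * card {w. mset w = replicate_mset m None + {#Some a#}}"
      by (rule card_words_add) (use ab in simp)
    also have "card {w. mset w = replicate_mset m None + {#Some a#}} = Suc m * card {w. mset w = replicate_mset m (None :: 'a option)}"
      using card_words_add[of "replicate_mset m None" "Some a"] by simp
    finally show ?thesis unfolding e by (simp add: card_words_replicate)
  qed
  have seq: "set (Cc m a b) = {w. mset w = patm m {#a, b#}}"
  proof (rule card_subset_eq)
    show "finite {w. mset w = patm m {#a, b#}}"
      using finite_permutations_of_multiset by (simp add: permutations_of_multiset_def)
    show "card (set (Cc m a b)) = card {w. mset w = patm m {#a, b#}}"
      using distinct_card[OF dist] len cw by simp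
  qed (rule sub)
  have succ: "successively adj_interchange (Cc m a b)"
    unfolding C
  proof (rule successively_concat_upt)
    fix y assume y: "1 \<le> y" "y \<le> m + 1"
    show "G y \<noteq> [] \<and> successively adj_interchange (G y)"
      using y lenG[of y] phase_succ[of y m] unfolding G_def by auto
  next
    fix y assume y: "1 \<le> y" "y < m + 1"
    have l: "length (wd m 0 y u v) = m + 2" for u v :: 'a using y by (intro length_wd) auto
    show "adj_interchange (last (G y)) (hd (G (Suc y)))"
      using y l unfolding G_def
      by (auto simp: phase_hd phase_last intro!: adjI wd_ext)
  qed
  have ne: "Cc m a b \<noteq> []" using len by auto
  show "gray (patm m {#a, b#}) (Cc m a b)"
    unfolding gray_def using ne dist seq succ by (simp add: successively_conv_nth)
  show "hd (Cc m a b) = [Some b, Some a] @ replicate m None"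
  proof -
    have "[1..<Suc (m + 1)] = 1 # [Suc 1..<Suc (m + 1)]" by (rule upt_conv_Cons) simp
    then have "Cc m a b = G 1 @ concat (map G [Suc 1..<Suc (m + 1)])" unfolding C by (simp del: upt_Suc)
    moreover have "G 1 \<noteq> []" using lenG[of 1] by auto
    ultimately have "hd (Cc m a b) = hd (G 1)" by simp
    also have "\<dots> = wd m 0 1 b a" unfolding G_def by (simp add: phase_hd)
    finally show ?thesis by (simp add: wd_def)
  qed
  show "last (Cc m a b) = Some a # replicate m None @ [Some b]"
  proof -
    have "Cc m a b = concat (map G [1..<m + 1]) @ G (m + 1)" unfolding C by simp
    moreover have "G (m + 1) \<noteq> []" using lenG[of "m + 1"] by auto
    ultimately have "last (Cc m a b) = last (G (m + 1))" by simp
    also have "\<dots> = wd m 0 (m + 1) a b" unfolding G_def using m by (simp add: phase_last)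
    finally show ?thesis by (simp add: wd_def)
  qed
qed



fun sweeps :: "('a \<times> bool) list \<Rightarrow> 'a list list \<Rightarrow> 'a list list" where
  "sweeps [] P = P"
| "sweeps ((x, s) # os) P = sweeps os (sweep x s P)"

fun addsides :: "('a \<times> bool) list \<Rightarrow> 'a list \<Rightarrow> 'a list" where
  "addsides [] w = w"
| "addsides ((x, s) # os) w = addsides os (if s then x # w else w @ [x])"

lemma sweeps_props:
  assumes "gray M P" "distinct (map fst os)" "\<forall>x\<in>set (map fst os). x \<notin># M" "even (length P)"
  shows "gray (M + mset (map fst os)) (sweeps os P) \<and> hd (sweeps os P) = addsides os (hd P) \<and>
         last (sweeps os P) = addsides os (last P) \<and> even (length (sweeps os P))"
  using assms
proof (induction os arbitrary: M P)
  case Nil then show ?case by simp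
next
  case (Cons ox os)
  obtain x s where o: "ox = (x, s)" by (cases ox)
  have x: "x \<notin># M" using Cons.prems o by simp
  have g: "gray (M + {#x#}) (sweep x s P)" by (rule gray_sweep[OF Cons.prems(1) x])
  have h: "hd (sweep x s P) = (if s then x # hd P else hd P @ [x])" by (rule sweep_hd[OF Cons.prems(1)])
  have l: "last (sweep x s P) = (if s then x # last P else last P @ [x])"
    using sweep_last[OF Cons.prems(1)] Cons.prems(4) by simp
  have e: "even (length (sweep x s P))" using sweep_length[OF Cons.prems(1)] Cons.prems(4) by simp
  have d: "distinct (map fst os)" using Cons.prems o by simp
  have n: "\<forall>y\<in>set (map fst os). y \<notin># M + {#x#}" using Cons.prems o by auto
  note IH = Cons.IH[OF g d n e]
  show ?case using IH o h l by (simp add: add.assoc add_mset_commute)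
qed

lemma contig_addsides: "contig m w \<Longrightarrow> contig m (addsides (map (\<lambda>(x, s). (Some x, s)) os) w)"
proof (induction os arbitrary: w)
  case Nil then show ?case by simp
next
  case (Cons ox os)
  obtain x s where o: "ox = (x, s)" by (cases ox)
  from Cons.prems obtain u v where w: "w = map Some u @ replicate m None @ map Some v"
    unfolding contig_def by blast
  have "contig m (if s then Some x # w else w @ [Some x])"
    unfolding contig_def w by (cases s) (rule exI[of _ "x # u"], rule exI[of _ v], simp,
        rule exI[of _ u], rule exI[of _ "v @ [x]"], simp)
  then show ?case using Cons.IH o by simp
qed

lemma contig_rev: assumes "contig m w" shows "contig m (rev w)"
proof -
  obtain u v where "w = map Some u @ replicate m None @ map Some v" using assms contig_def by blast
  then have "rev w = map Some (rev v) @ replicate m None @ map Some (rev u)" by (simp add: rev_map)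
  then show ?thesis unfolding contig_def by blast
qed

lemma gray_blank: "gray (replicate_mset m None) [replicate m None]"
proof -
  have "{w. mset w = replicate_mset m (None :: 'a option)} = {replicate m None}"
  proof (intro equalityI subsetI)
    fix w assume "w \<in> {w. mset w = replicate_mset m (None :: 'a option)}"
    then have w: "mset w = replicate_mset m None" by simp
    then have "length w = m" by (metis size_mset size_replicate_mset)
    moreover have "\<forall>c\<in>set w. c = None" using w
      by (metis set_mset_mset set_mset_replicate_mset_subset singletonD empty_iff)
    ultimately show "w \<in> {replicate m None}" by (simp add: replicate_eqI)
  qed simp
  then show ?thesis unfolding gray_def by simp
qed

definition coreS :: "nat \<Rightarrow> 'a \<Rightarrow> bool \<Rightarrow> 'a \<Rightarrow> bool \<Rightarrow> 'a option list list" where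
  "coreS m x sx y sy = sweep (Some y) sy (sweep (Some x) sx [replicate m None])"

lemma coreS_props:
  assumes "x \<noteq> y" "even m"
  shows "gray (patm m {#x, y#}) (coreS m x sx y sy)"
    "hd (coreS m x sx y sy) = (let w = (if sx then Some x # replicate m None else replicate m None @ [Some x])
        in if sy then Some y # w else w @ [Some y])"
    "last (coreS m x sx y sy) = (let w = (if sx then replicate m None @ [Some x] else Some x # replicate m None)
        in if sy then w @ [Some y] else Some y # w)"
    "even (length (coreS m x sx y sy))"
proof -
  note g0 = gray_blank[where m = m and 'a = 'a]
  have g1: "gray (replicate_mset m None + {#Some x#}) (sweep (Some x) sx [replicate m None])"
    by (rule gray_sweep[OF g0]) simp
  have g2: "gray (replicate_mset m None + {#Some x#} + {#Some y#}) (coreS m x sx y sy)"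
    unfolding coreS_def by (rule gray_sweep[OF g1]) (use assms in simp)
  then show "gray (patm m {#x, y#}) (coreS m x sx y sy)" by (simp add: patm_def add_mset_commute)
  have l1: "length (sweep (Some x) sx [replicate m None]) = Suc m"
    using sweep_length[OF g0] by simp
  have h1: "hd (sweep (Some x) sx [replicate m None]) = (if sx then Some x # replicate m None else replicate m None @ [Some x])"
    using sweep_hd[OF g0] by simp
  have t1: "last (sweep (Some x) sx [replicate m None]) = (if sx then replicate m None @ [Some x] else Some x # replicate m None)"
    using sweep_last[OF g0] by simp
  show "hd (coreS m x sx y sy) = (let w = (if sx then Some x # replicate m None else replicate m None @ [Some x])
        in if sy then Some y # w else w @ [Some y])"
    unfolding coreS_def sweep_hd[OF g1] h1 by simp
  show "last (coreS m x sx y sy) = (let w = (if sx then replicate m None @ [Some x] else Some x # replicate m None)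
        in if sy then w @ [Some y] else Some y # w)"
    unfolding coreS_def sweep_last[OF g1] t1 l1 using assms(2) by simp
  show "even (length (coreS m x sx y sy))"
    unfolding coreS_def sweep_length[OF g1] l1 by simp
qed

lemma CcM_props:
  assumes "x \<noteq> y" "even m"
  shows "gray (patm m {#x, y#}) (map rev (Cc m x y))"
    "hd (map rev (Cc m x y)) = replicate m None @ [Some x, Some y]"
    "last (map rev (Cc m x y)) = Some y # replicate m None @ [Some x]"
    "even (length (map rev (Cc m x y)))"
proof -
  note C = gray_Cc[OF assms]
  have ne: "Cc m x y \<noteq> []" using C(1) by (simp add: gray_def)
  show "gray (patm m {#x, y#}) (map rev (Cc m x y))" by (rule gray_map_rev[OF C(1)])
  show "hd (map rev (Cc m x y)) = replicate m None @ [Some x, Some y]"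
    using ne C(2) by (simp add: hd_map)
  show "last (map rev (Cc m x y)) = Some y # replicate m None @ [Some x]"
    using ne C(3) by (simp add: last_map)
  have e: "Cc m x y = concat (map (\<lambda>y'. if odd y' then phase m y' y x else phase m y' x y) [1..<Suc (m + 1)])"
    unfolding Cc_def by simp
  have "length (Cc m x y) = (m + 1) * Suc (m + 1)"
    unfolding e by (rule length_concat_upt) (simp add: length_phase)
  then show "even (length (map rev (Cc m x y)))" by simp
qed



lemma set_perm_words: "permutations_of_set {1..n} = {w. mset w = mset_set {1..(n::nat)}}"
  by (simp add: permutations_of_set_altdef permutations_of_multiset_def)

lemma rag_gray: "reverse_adj_gray_code m B \<Longrightarrow> gray (mset_set {1..m}) B"
  unfolding reverse_adj_gray_code_def gray_def set_perm_words
  by (auto simp: fact_gt_zero)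

lemma gray_rag_basic:
  assumes "gray (mset_set {1..n}) L"
  shows "length L = fact n" "distinct L" "set L = permutations_of_set {1..n}"
    "\<forall>i. Suc i < length L \<longrightarrow> adj_interchange (L ! i) (L ! Suc i)"
proof -
  have e: "{w. mset w = mset_set {1..n}} = permutations_of_set {1..n}" by (rule set_perm_words[symmetric])
  have "length L = card (permutations_of_set {1..n})" by (simp only: gray_length[OF assms] e)
  then show "length L = fact n" by simp
  show "distinct L" "set L = permutations_of_set {1..n}"
    "\<forall>i. Suc i < length L \<longrightarrow> adj_interchange (L ! i) (L ! Suc i)"
    using assms unfolding gray_def set_perm_words by auto
qed

lemma assemble:
  fixes B :: "nat list list" and ms :: "nat option list list list" and Mx :: "nat multiset"
  assumes B: "reverse_adj_gray_code m B" and m4: "4 \<le> m"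
    and Mx: "mset_set {1..m} + Mx = mset_set {1..m + r}" "set_mset Mx \<inter> {1..m} = {}"
    and c: "length ms = Suc c" "odd c" "c < fact m div 2"
    and g: "\<forall>i<length ms. gray (patm m Mx) (ms ! i) \<and> contig m (hd (ms ! i)) \<and> contig m (last (ms ! i))"
    and ch: "\<forall>i. Suc i < length ms \<longrightarrow> last (ms ! i) = hd (ms ! Suc i)"
    and fin: "last (ms ! c) = rev (hd (ms ! 0))"
  shows "\<exists>L. reverse_adj_gray_code (m + r) L"
proof -
  define H :: nat where "H = fact m div 2"
  have d4: "(4::nat) dvd fact m" using m4 by (intro dvd_fact) auto
  have fm: "fact m = 2 * H" unfolding H_def using d4 by auto
  have He: "even H" unfolding H_def using d4 by auto
  have lenB: "length B = 2 * H" using B fm unfolding reverse_adj_gray_code_def by simp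
  have Brev: "\<And>k. k < H \<Longrightarrow> B ! (k + H) = rev (B ! k)"
    using B unfolding reverse_adj_gray_code_def H_def by simp
  have gB: "gray (mset_set {1..m}) B" by (rule rag_gray[OF B])
  have cH: "c < H" using c unfolding H_def by simp
  define T0 where "T0 k = (if k < c then ms ! k else if even (k - c) then ms ! c else rev (ms ! c))" for k
  define T where "T k = (if k < H then T0 k else map rev (T0 (k - H)))" for k
  have gc: "gray (patm m Mx) (ms ! c)" "contig m (hd (ms ! c))" "contig m (last (ms ! c))"
    using g c by auto
  have T0g: "gray (patm m Mx) (T0 k)" for k
    unfolding T0_def using g c gc gray_rev by auto
  have T0ne: "T0 k \<noteq> []" for k using T0g[of k] by (simp add: gray_def)
  have T0c: "contig m (hd (T0 k)) \<and> contig m (last (T0 k))" for k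
    unfolding T0_def using g c gc by (auto simp: hd_rev last_rev)
  have T0conn: "last (T0 k) = hd (T0 (Suc k))" if "Suc k < H" for k
  proof (cases "Suc k < c")
    case True then show ?thesis unfolding T0_def using ch c by auto
  next
    case False
    show ?thesis
    proof (cases "Suc k = c")
      case True then show ?thesis unfolding T0_def using ch c by auto
    next
      case False
      then have kc: "c \<le> k" using \<open>\<not> Suc k < c\<close> by simp
      then have s: "Suc k - c = Suc (k - c)" by simp
      show ?thesis unfolding T0_def using kc s by (auto simp: hd_rev last_rev)
    qed
  qed
  have T0end: "last (T0 (H - 1)) = rev (hd (T0 0))"
  proof -
    have "even (H - 1 - c)" using He c cH by auto
    moreover have "\<not> H - 1 < c" using cH by simp
    moreover have "0 < c" using c by (cases c) auto
    ultimately show ?thesis unfolding T0_def using fin by simp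
  qed
  have Tg: "\<forall>k<length B. gray (patm (size (mset_set {1..m})) Mx) (T k)"
    unfolding T_def using T0g gray_map_rev by auto
  have conn: "\<forall>k. Suc k < length B \<longrightarrow> last (T k) = hd (T (Suc k)) \<and> contig (size (mset_set {1..m})) (last (T k))"
  proof (intro allI impI)
    fix k assume k: "Suc k < length B"
    have cont: "contig m (last (T k))"
      unfolding T_def using T0c T0ne by (auto simp: last_map intro: contig_rev)
    have "last (T k) = hd (T (Suc k))"
    proof (cases "Suc k < H")
      case True then show ?thesis unfolding T_def using T0conn by simp
    next
      case False
      show ?thesis
      proof (cases "Suc k = H")
        case True
        then have "k = H - 1" "k < H" by auto
        then show ?thesis unfolding T_def using True T0end T0ne by (simp add: hd_map)
      next
        case False
        then have kH: "H \<le> k" using \<open>\<not> Suc k < H\<close> by simp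
        then have s: "Suc k - H = Suc (k - H)" by simp
        have "Suc (k - H) < H" using k lenB kH by simp
        then have "last (T0 (k - H)) = hd (T0 (Suc (k - H)))" by (rule T0conn)
        then show ?thesis unfolding T_def using kH s T0ne by (simp add: hd_map last_map)
      qed
    qed
    then show "last (T k) = hd (T (Suc k)) \<and> contig (size (mset_set {1..m})) (last (T k))"
      using cont by simp
  qed
  have disj: "set_mset (mset_set {1..m}) \<inter> set_mset Mx = {}" using Mx(2) by auto
  define L where "L = blocks B T"
  have gL: "gray (mset_set {1..m + r}) L"
    unfolding L_def Mx(1)[symmetric] by (rule blocks_gray[OF gB disj Tg conn])
  note bas = gray_rag_basic[OF gL]
  define q where "q = card {P. mset P = patm m Mx}"
  have lenT: "\<forall>k<length B. length (T k) = q"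
    unfolding q_def using Tg gray_length by auto
  have lenL: "length L = length B * q" unfolding L_def by (rule blocks_nth(1)[OF lenT])
  have nthL: "\<And>k t. k < length B \<Longrightarrow> t < q \<Longrightarrow> L ! (k * q + t) = merge (B ! k) (T k ! t)"
    unfolding L_def by (rule blocks_nth(2)[OF lenT])
  have half: "fact (m + r) div 2 = H * q" using bas(1) lenL lenB by simp
  have sym: "\<forall>i < fact (m + r) div 2. L ! (i + fact (m + r) div 2) = rev (L ! i)"
  proof (intro allI impI)
    fix i :: nat assume "i < fact (m + r) div 2"
    then have i: "i < H * q" using half by simp
    note d = div_mod_decomp[OF i]
    define k where "k = i div q"
    define t where "t = i mod q"
    have k: "k < H" and t: "t < q" and ie: "i = k * q + t" using d unfolding k_def t_def by auto
    have kB: "k < length B" "k + H < length B" using k lenB by auto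
    have Li: "L ! i = merge (B ! k) (T0 k ! t)" using nthL[OF kB(1) t] ie k unfolding T_def by simp
    have "i + H * q = (k + H) * q + t" using ie by (simp add: algebra_simps)
    then have "L ! (i + H * q) = merge (B ! (k + H)) (T (k + H) ! t)" using nthL[OF kB(2) t] by simp
    also have "\<dots> = merge (rev (B ! k)) (rev (T0 k ! t))"
    proof -
      have "length (T k) = q" using lenT kB(1) by blast
      then have lt: "length (T0 k) = q" using k unfolding T_def by simp
      have "T (k + H) = map rev (T0 k)" unfolding T_def by simp
      then show ?thesis using Brev[OF k] t lt by simp
    qed
    also have "\<dots> = rev (merge (B ! k) (T0 k ! t))"
    proof -
      have "length (T k) = q" using lenT kB(1) by blast
      then have "length (T0 k) = q" using k unfolding T_def by simp
      then have "T0 k ! t \<in> set (T0 k)" using t by simp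
      then have "mset (T0 k ! t) = patm m Mx" using T0g[of k] by (simp add: gray_def)
      then have "cN (T0 k ! t) = m" by (rule pat_props(1))
      moreover have "length (B ! k) = m"
      proof -
        have "B ! k \<in> set B" using kB(1) by simp
        then have "mset (B ! k) = mset_set {1..m}" using gB unfolding gray_def by auto
        then have "length (B ! k) = size (mset_set {1..m})" by (metis size_mset)
        then show ?thesis by simp
      qed
      ultimately show ?thesis by (simp add: merge_rev)
    qed
    finally show "L ! (i + fact (m + r) div 2) = rev (L ! i)" using half Li by simp
  qed
  have "reverse_adj_gray_code (m + r) L"
    unfolding reverse_adj_gray_code_def using bas sym by simp
  then show ?thesis by blast
qed



definition liftos :: "('a \<times> bool) list \<Rightarrow> ('a option \<times> bool) list" where
  "liftos os = map (\<lambda>(z, s). (Some z, s)) os"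

lemma contigI: "contig m (map Some u @ replicate m None @ map Some v)"
  unfolding contig_def by blast

lemma mv_props:
  assumes core: "gray (patm m {#x, y#}) K" "even (length K)" "contig m (hd K)" "contig m (last K)"
    and d: "distinct (x # y # map fst os)"
  shows "gray (patm m (mset (x # y # map fst os))) (sweeps (liftos os) K)"
    "hd (sweeps (liftos os) K) = addsides (liftos os) (hd K)"
    "last (sweeps (liftos os) K) = addsides (liftos os) (last K)"
    "contig m (hd (sweeps (liftos os) K))" "contig m (last (sweeps (liftos os) K))"
proof -
  have fo: "map fst (liftos os) = map Some (map fst os)"
    unfolding liftos_def by (induction os) auto
  have ds: "distinct xs \<Longrightarrow> distinct (map Some xs)" for xs :: "'a list" by (induction xs) auto
  have d1: "distinct (map fst (liftos os))" unfolding fo by (rule ds) (use d in simp)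
  have d2: "\<forall>z\<in>set (map fst (liftos os)). z \<notin># patm m {#x, y#}"
    using d unfolding fo by (auto simp: patm_def)
  note P = sweeps_props[OF core(1) d1 d2 core(2)]
  have ms: "patm m {#x, y#} + mset (map fst (liftos os)) = patm m (mset (x # y # map fst os))"
    unfolding fo by (simp add: patm_def multiset.map_comp)
  show "gray (patm m (mset (x # y # map fst os))) (sweeps (liftos os) K)" using P ms by simp
  show h: "hd (sweeps (liftos os) K) = addsides (liftos os) (hd K)" using P by simp
  show l: "last (sweeps (liftos os) K) = addsides (liftos os) (last K)" using P by simp
  have ca: "contig m (addsides (liftos os) w)" if "contig m w" for w
    using contig_addsides[OF that, of os] unfolding liftos_def .
  show "contig m (hd (sweeps (liftos os) K))" unfolding h by (rule ca[OF core(3)])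
  show "contig m (last (sweeps (liftos os) K))" unfolding l by (rule ca[OF core(4)])
qed

definition mvS :: "nat \<Rightarrow> 'a \<Rightarrow> bool \<Rightarrow> 'a \<Rightarrow> bool \<Rightarrow> ('a \<times> bool) list \<Rightarrow> 'a option list list" where
  "mvS m x sx y sy os = sweeps (liftos os) (coreS m x sx y sy)"

definition mvC :: "nat \<Rightarrow> 'a \<Rightarrow> 'a \<Rightarrow> ('a \<times> bool) list \<Rightarrow> 'a option list list" where
  "mvC m x y os = sweeps (liftos os) (Cc m x y)"

definition mvM :: "nat \<Rightarrow> 'a \<Rightarrow> 'a \<Rightarrow> ('a \<times> bool) list \<Rightarrow> 'a option list list" where
  "mvM m x y os = sweeps (liftos os) (map rev (Cc m x y))"

lemma contig_core_S: "contig m (let w = (if sx then Some x # replicate m None else replicate m None @ [Some x])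
        in if sy then Some y # w else w @ [Some y])"
  by (cases sx; cases sy) (simp_all add: Let_def contigI[of m "[_, _]" "[]", simplified]
      contigI[of m "[]" "[_, _]", simplified] contigI[of m "[_]" "[_]", simplified])

lemma contig_core_S': "contig m (let w = (if sx then replicate m None @ [Some x] else Some x # replicate m None)
        in if sy then w @ [Some y] else Some y # w)"
  by (cases sx; cases sy) (simp_all add: Let_def contigI[of m "[_, _]" "[]", simplified]
      contigI[of m "[]" "[_, _]", simplified] contigI[of m "[_]" "[_]", simplified])

lemma mvS_props:
  assumes "distinct (x # y # map fst os)" "even m"
  shows "gray (patm m (mset (x # y # map fst os))) (mvS m x sx y sy os)"
    "hd (mvS m x sx y sy os) = addsides (liftos os) (let w = (if sx then Some x # replicate m None else replicate m None @ [Some x])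
        in if sy then Some y # w else w @ [Some y])"
    "last (mvS m x sx y sy os) = addsides (liftos os) (let w = (if sx then replicate m None @ [Some x] else Some x # replicate m None)
        in if sy then w @ [Some y] else Some y # w)"
    "contig m (hd (mvS m x sx y sy os))" "contig m (last (mvS m x sx y sy os))"
proof -
  have xy: "x \<noteq> y" using assms by simp
  note c = coreS_props[OF xy assms(2), of sx sy]
  have ch: "contig m (hd (coreS m x sx y sy))" unfolding c(2) by (rule contig_core_S)
  have cl: "contig m (last (coreS m x sx y sy))" unfolding c(3) by (rule contig_core_S')
  note P = mv_props[OF c(1) c(4) ch cl assms(1)]
  show "gray (patm m (mset (x # y # map fst os))) (mvS m x sx y sy os)" using P unfolding mvS_def by simp
  show "hd (mvS m x sx y sy os) = addsides (liftos os) (let w = (if sx then Some x # replicate m None else replicate m None @ [Some x])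
        in if sy then Some y # w else w @ [Some y])" using P c unfolding mvS_def by simp
  show "last (mvS m x sx y sy os) = addsides (liftos os) (let w = (if sx then replicate m None @ [Some x] else Some x # replicate m None)
        in if sy then w @ [Some y] else Some y # w)" using P c unfolding mvS_def by simp
  show "contig m (hd (mvS m x sx y sy os))" "contig m (last (mvS m x sx y sy os))"
    using P unfolding mvS_def by simp_all
qed

lemma mvC_props:
  assumes "distinct (x # y # map fst os)" "even m"
  shows "gray (patm m (mset (x # y # map fst os))) (mvC m x y os)"
    "hd (mvC m x y os) = addsides (liftos os) ([Some y, Some x] @ replicate m None)"
    "last (mvC m x y os) = addsides (liftos os) (Some x # replicate m None @ [Some y])"
    "contig m (hd (mvC m x y os))" "contig m (last (mvC m x y os))"
proof -
  have xy: "x \<noteq> y" using assms by simp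
  note c = gray_Cc[OF xy assms(2)]
  note cm = CcM_props[OF xy assms(2)]
  have e: "even (length (Cc m x y))" using cm(4) by simp
  have ch: "contig m (hd (Cc m x y))" unfolding c(2) using contigI[of m "[y, x]" "[]"] by simp
  have cl: "contig m (last (Cc m x y))" unfolding c(3) using contigI[of m "[x]" "[y]"] by simp
  note P = mv_props[OF c(1) e ch cl assms(1)]
  show "gray (patm m (mset (x # y # map fst os))) (mvC m x y os)" using P unfolding mvC_def by simp
  show "hd (mvC m x y os) = addsides (liftos os) ([Some y, Some x] @ replicate m None)"
    using P c unfolding mvC_def by simp
  show "last (mvC m x y os) = addsides (liftos os) (Some x # replicate m None @ [Some y])"
    using P c unfolding mvC_def by simp
  show "contig m (hd (mvC m x y os))" "contig m (last (mvC m x y os))"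
    using P unfolding mvC_def by simp_all
qed

lemma mvM_props:
  assumes "distinct (x # y # map fst os)" "even m"
  shows "gray (patm m (mset (x # y # map fst os))) (mvM m x y os)"
    "hd (mvM m x y os) = addsides (liftos os) (replicate m None @ [Some x, Some y])"
    "last (mvM m x y os) = addsides (liftos os) (Some y # replicate m None @ [Some x])"
    "contig m (hd (mvM m x y os))" "contig m (last (mvM m x y os))"
proof -
  have xy: "x \<noteq> y" using assms by simp
  note cm = CcM_props[OF xy assms(2)]
  have ch: "contig m (hd (map rev (Cc m x y)))" unfolding cm(2) using contigI[of m "[]" "[x, y]"] by simp
  have cl: "contig m (last (map rev (Cc m x y)))" unfolding cm(3) using contigI[of m "[y]" "[x]"] by simp
  note P = mv_props[OF cm(1) cm(4) ch cl assms(1)]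
  show "gray (patm m (mset (x # y # map fst os))) (mvM m x y os)" using P unfolding mvM_def by simp
  show "hd (mvM m x y os) = addsides (liftos os) (replicate m None @ [Some x, Some y])"
    using P cm unfolding mvM_def by simp
  show "last (mvM m x y os) = addsides (liftos os) (Some y # replicate m None @ [Some x])"
    using P cm unfolding mvM_def by simp
  show "contig m (hd (mvM m x y os))" "contig m (last (mvM m x y os))"
    using P unfolding mvM_def by simp_all
qed



lemma mset_set_ext: "mset_set {1..m} + mset (map (\<lambda>i. m + i) [1..<Suc k]) = mset_set {1..m + k}"
proof (induction k)
  case 0 then show ?case by simp
next
  case (Suc k)
  have "{1..m + Suc k} = insert (m + Suc k) {1..m + k}" by auto
  then have "mset_set {1..m + Suc k} = add_mset (m + Suc k) (mset_set {1..m + k})" by simp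
  then show ?case using Suc by simp
qed

lemma chain_intro:
  assumes "successively (\<lambda>X Y. last X = hd Y) ms"
  shows "\<forall>i. Suc i < length ms \<longrightarrow> last (ms ! i) = hd (ms ! Suc i)"
  using assms by (simp add: successively_conv_nth)

lemma all_intro: "\<forall>X\<in>set ms. P X \<Longrightarrow> \<forall>i<length ms. P (ms ! i)"
  by simp

lemma fact_half_big: "4 \<le> m \<Longrightarrow> (9::nat) < fact m div 2"
proof -
  assume m: "4 \<le> m"
  have "fact 4 \<le> (fact m :: nat)" using m by (rule fact_mono)
  moreover have "fact 4 = (24::nat)" by (simp add: fact_numeral)
  ultimately have "(24::nat) \<le> fact m" by simp
  then have "24 div 2 \<le> fact m div (2::nat)" by (rule div_le_mono)
  then show ?thesis by simp
qed

definition ms4 :: "nat \<Rightarrow> nat option list list list" where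
  "ms4 m = [mvS m (m+1) True (m+2) False [(m+3, True), (m+4, True)],
            mvC m (m+2) (m+3) [(m+1, False), (m+4, True)],
            mvC m (m+2) (m+4) [(m+3, False), (m+1, False)],
            mvM m (m+4) (m+3) [(m+1, False), (m+2, True)],
            mvM m (m+4) (m+1) [(m+3, True), (m+2, True)],
            mvS m (m+1) True (m+3) True [(m+2, True), (m+4, False)]]"

definition good :: "nat \<Rightarrow> 'a multiset \<Rightarrow> 'a option list list \<Rightarrow> bool" where
  "good m Mx X \<longleftrightarrow> gray (patm m Mx) X \<and> contig m (hd X) \<and> contig m (last X)"

lemma mvS_good: "distinct (x # y # map fst os) \<Longrightarrow> even m \<Longrightarrow> mset (x # y # map fst os) = Mx \<Longrightarrow>
  good m Mx (mvS m x sx y sy os)"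
  unfolding good_def using mvS_props by metis

lemma mvC_good: "distinct (x # y # map fst os) \<Longrightarrow> even m \<Longrightarrow> mset (x # y # map fst os) = Mx \<Longrightarrow>
  good m Mx (mvC m x y os)"
  unfolding good_def using mvC_props by metis

lemma mvM_good: "distinct (x # y # map fst os) \<Longrightarrow> even m \<Longrightarrow> mset (x # y # map fst os) = Mx \<Longrightarrow>
  good m Mx (mvM m x y os)"
  unfolding good_def using mvM_props by metis

lemma rev_good: "good m Mx X \<Longrightarrow> good m Mx (rev X)"
  unfolding good_def by (simp add: gray_rev hd_rev last_rev)

lemmas mv_hd_last = mvS_props(2,3) mvC_props(2,3) mvM_props(2,3)

lemma step4:
  assumes B: "reverse_adj_gray_code m B" and m: "4 \<le> m" "even m"
  shows "\<exists>L. reverse_adj_gray_code (m + 4) L"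
proof (rule assemble[OF B m(1), where Mx = "mset [m+1, m+2, m+3, m+4]" and ms = "ms4 m" and c = 5])
  show "mset_set {1..m} + mset [m + 1, m + 2, m + 3, m + 4] = mset_set {1..m + 4}"
    using mset_set_ext[of m 4] by (simp add: numeral_eq_Suc)
  show "set_mset (mset [m + 1, m + 2, m + 3, m + 4]) \<inter> {1..m} = {}" by auto
  show "length (ms4 m) = Suc 5" by (simp add: ms4_def)
  show "odd (5::nat)" by simp
  show "(5::nat) < fact m div 2" using fact_half_big[OF m(1)] by simp
  show "\<forall>i<length (ms4 m). gray (patm m (mset [m + 1, m + 2, m + 3, m + 4])) (ms4 m ! i) \<and>
      contig m (hd (ms4 m ! i)) \<and> contig m (last (ms4 m ! i))"
  proof -
    have e: "even m" by (rule m(2))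
    have "\<forall>X\<in>set (ms4 m). good m (mset [m + 1, m + 2, m + 3, m + 4]) X"
      unfolding ms4_def list.set ball_simps
      by (intro conjI TrueI; (rule mvS_good mvC_good mvM_good rev_good); simp add: e add_mset_commute)
    then show ?thesis unfolding good_def by simp
  qed
  show "\<forall>i. Suc i < length (ms4 m) \<longrightarrow> last (ms4 m ! i) = hd (ms4 m ! Suc i)"
    by (rule chain_intro) (simp add: ms4_def mv_hd_last m(2) liftos_def)
  show "last (ms4 m ! 5) = rev (hd (ms4 m ! 0))"
    by (simp add: ms4_def mv_hd_last m(2) liftos_def)
qed

definition ms5 :: "nat \<Rightarrow> nat option list list list" where
  "ms5 m = [mvS m (m+1) True (m+2) False [(m+3, True), (m+4, True), (m+5, True)],
            mvC m (m+2) (m+3) [(m+1, False), (m+4, True), (m+5, True)],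
            mvC m (m+2) (m+4) [(m+3, False), (m+1, False), (m+5, True)],
            mvC m (m+2) (m+5) [(m+4, False), (m+3, False), (m+1, False)],
            mvM m (m+5) (m+4) [(m+2, True), (m+3, False), (m+1, False)],
            rev (mvS m (m+5) True (m+3) True [(m+1, False), (m+4, True), (m+2, True)]),
            rev (mvM m (m+1) (m+5) [(m+3, True), (m+4, True), (m+2, True)]),
            mvC m (m+3) (m+4) [(m+1, False), (m+2, True), (m+5, False)],
            mvM m (m+4) (m+1) [(m+3, True), (m+2, True), (m+5, False)],
            mvS m (m+1) True (m+3) True [(m+2, True), (m+4, False), (m+5, False)]]"

lemma step5:
  assumes B: "reverse_adj_gray_code m B" and m: "4 \<le> m" "even m"
  shows "\<exists>L. reverse_adj_gray_code (m + 5) L"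
proof (rule assemble[OF B m(1), where Mx = "mset [m+1, m+2, m+3, m+4, m+5]" and ms = "ms5 m" and c = 9])
  show "mset_set {1..m} + mset [m + 1, m + 2, m + 3, m + 4, m + 5] = mset_set {1..m + 5}"
    using mset_set_ext[of m 5] by (simp add: numeral_eq_Suc)
  show "set_mset (mset [m + 1, m + 2, m + 3, m + 4, m + 5]) \<inter> {1..m} = {}" by auto
  show "length (ms5 m) = Suc 9" by (simp add: ms5_def)
  show "odd (9::nat)" by simp
  show "(9::nat) < fact m div 2" using fact_half_big[OF m(1)] by simp
  show "\<forall>i<length (ms5 m). gray (patm m (mset [m + 1, m + 2, m + 3, m + 4, m + 5])) (ms5 m ! i) \<and>
      contig m (hd (ms5 m ! i)) \<and> contig m (last (ms5 m ! i))"
  proof -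
    have e: "even m" by (rule m(2))
    have "\<forall>X\<in>set (ms5 m). good m (mset [m + 1, m + 2, m + 3, m + 4, m + 5]) X"
      unfolding ms5_def list.set ball_simps
      by (intro conjI TrueI; (rule rev_good)?; (rule mvS_good mvC_good mvM_good); simp add: e add_mset_commute)
    then show ?thesis unfolding good_def by simp
  qed
  show "\<forall>i. Suc i < length (ms5 m) \<longrightarrow> last (ms5 m ! i) = hd (ms5 m ! Suc i)"
    by (rule chain_intro) (simp add: ms5_def mv_hd_last m(2) liftos_def hd_rev last_rev)
  show "last (ms5 m ! 9) = rev (hd (ms5 m ! 0))"
    by (simp add: ms5_def mv_hd_last m(2) liftos_def)
qed



section \<open>Small cases by computation\<close>

lemma rag_of_check:
  assumes len: "length L = fact n" and dist: "distinct L"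
    and perm: "\<forall>w\<in>set L. sort w = [1..<Suc n]"
    and adj0: "list_all2 (\<lambda>u v. \<exists>j\<in>set [0..<n - 1]. v = u[j := u ! Suc j, Suc j := u ! j]) (butlast L) (tl L)"
    and sym: "take (fact n div 2) (drop (fact n div 2) L) = map rev (take (fact n div 2) L)"
  shows "reverse_adj_gray_code n L"
proof -
  have adj: "list_all2 (\<lambda>u v. \<exists>j\<in>set [0..<n - 1]. v = adj_swap j u) (butlast L) (tl L)"
    using adj0 by (simp add: adj_swap_def)
  have inP: "w \<in> permutations_of_set {1..n}" if "w \<in> set L" for w
  proof -
    have s: "sort w = [1..<Suc n]" using perm that by blast
    have "set w = set (sort w)" by simp
    also have "\<dots> = {1..n}" unfolding s by auto
    finally have "set w = {1..n}" .
    moreover have "distinct w"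
    proof -
      have "distinct (sort w)" unfolding s by simp
      then show ?thesis by simp
    qed
    ultimately show ?thesis by (rule permutations_of_setI)
  qed
  have lenw: "length w = n" if "w \<in> set L" for w
    using inP[OF that] by (metis length_finite_permutations_of_set card_atLeastAtMost diff_Suc_1 finite_atLeastAtMost)
  have seq: "set L = permutations_of_set {1..n}"
  proof (rule card_subset_eq)
    show "finite (permutations_of_set {1..n})" by simp
    show "set L \<subseteq> permutations_of_set {1..n}" using inP by blast
    show "card (set L) = card (permutations_of_set {1..n})" using distinct_card[OF dist] len by simp
  qed
  have a: "adj_interchange (L ! i) (L ! Suc i)" if i: "Suc i < length L" for i
  proof -
    have "length (butlast L) = length (tl L)" by simp
    have "i < length (butlast L)" using i by simp
    then have "\<exists>j\<in>set [0..<n - 1]. tl L ! i = adj_swap j (butlast L ! i)"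
      using adj by (simp add: list_all2_conv_all_nth)
    moreover have "tl L ! i = L ! Suc i" "butlast L ! i = L ! i" using i by (auto simp: nth_tl nth_butlast)
    ultimately obtain j where j: "j < n - 1" "L ! Suc i = adj_swap j (L ! i)" by auto
    moreover have "length (L ! i) = n" using i lenw by simp
    ultimately have "Suc j < length (L ! i) \<and> L ! Suc i = adj_swap j (L ! i)" by simp
    then show ?thesis unfolding adj_interchange_def by blast
  qed
  have s: "L ! (i + fact n div 2) = rev (L ! i)" if i: "i < fact n div 2" for i
  proof -
    have h: "fact n div 2 \<le> (fact n :: nat)" by simp
    have "take (fact n div 2) (drop (fact n div 2) L) ! i = map rev (take (fact n div 2) L) ! i"
      using sym by simp
    moreover have "take (fact n div 2) (drop (fact n div 2) L) ! i = L ! (i + fact n div 2)"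
      using i len h by (simp add: add.commute)
    moreover have "map rev (take (fact n div 2) L) ! i = rev (L ! i)" using i len h by simp
    ultimately show ?thesis by simp
  qed
  show ?thesis unfolding reverse_adj_gray_code_def using len dist seq a s by blast
qed

lemma base1: "reverse_adj_gray_code 1 [[1]]"
  by (rule rag_of_check) code_simp+

lemma base2: "reverse_adj_gray_code 2 [[1,2],[2,1]]"
  by (rule rag_of_check) code_simp+

lemma base3: "reverse_adj_gray_code 3 [[1,2,3], [1,3,2], [3,1,2], [3,2,1], [2,3,1], [2,1,3]]"
  by (rule rag_of_check) code_simp+

definition L4 :: "nat list list" where "L4 = [[1,2,3,4], [1,2,4,3], [1,4,2,3], [4,1,2,3], [4,1,3,2], [1,4,3,2], [1,3,4,2], [1,3,2,4], [3,1,2,4], [3,1,4,2], [3,4,1,2], [4,3,1,2], [4,3,2,1], [3,4,2,1], [3,2,4,1], [3,2,1,4], [2,3,1,4], [2,3,4,1], [2,4,3,1], [4,2,3,1], [4,2,1,3], [2,4,1,3], [2,1,4,3], [2,1,3,4]]"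

lemma base4: "reverse_adj_gray_code 4 L4"
  unfolding L4_def by (rule rag_of_check) code_simp+

definition L5 :: "nat list list" where "L5 = [[1,2,3,4,5],
 [1,2,3,5,4],
 [1,2,5,3,4],
 [1,5,2,3,4],
 [5,1,2,3,4],
 [5,2,1,3,4],
 [2,5,1,3,4],
 [2,1,5,3,4],
 [2,1,3,5,4],
 [2,1,3,4,5],
 [2,3,1,4,5],
 [2,3,1,5,4],
 [2,3,5,1,4],
 [2,5,3,1,4],
 [5,2,3,1,4],
 [5,3,2,1,4],
 [3,5,2,1,4],
 [3,2,5,1,4],
 [3,2,1,5,4],
 [3,2,1,4,5],
 [3,1,2,4,5],
 [3,1,2,5,4],
 [3,1,5,2,4],
 [3,5,1,2,4],
 [5,3,1,2,4],
 [5,1,3,2,4],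
 [1,5,3,2,4],
 [1,3,5,2,4],
 [1,3,2,5,4],
 [1,3,2,4,5],
 [1,3,4,2,5],
 [1,3,4,5,2],
 [1,3,5,4,2],
 [1,5,3,4,2],
 [5,1,3,4,2],
 [5,3,1,4,2],
 [3,5,1,4,2],
 [3,1,5,4,2],
 [3,1,4,5,2],
 [3,1,4,2,5],
 [3,4,1,2,5],
 [3,4,1,5,2],
 [3,4,5,1,2],
 [3,4,5,2,1],
 [3,4,2,5,1],
 [3,4,2,1,5],
 [3,2,4,1,5],
 [2,3,4,1,5],
 [2,3,4,5,1],
 [3,2,4,5,1],
 [3,2,5,4,1],
 [2,3,5,4,1],
 [2,5,3,4,1],
 [5,2,3,4,1],
 [5,3,2,4,1],
 [3,5,2,4,1],
 [3,5,4,2,1],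
 [3,5,4,1,2],
 [5,3,4,1,2],
 [5,3,4,2,1],
 [5,4,3,2,1],
 [4,5,3,2,1],
 [4,3,5,2,1],
 [4,3,2,5,1],
 [4,3,2,1,5],
 [4,3,1,2,5],
 [4,3,1,5,2],
 [4,3,5,1,2],
 [4,5,3,1,2],
 [5,4,3,1,2],
 [5,4,1,3,2],
 [4,5,1,3,2],
 [4,1,5,3,2],
 [4,1,3,5,2],
 [4,1,3,2,5],
 [4,1,2,3,5],
 [4,1,2,5,3],
 [4,1,5,2,3],
 [4,5,1,2,3],
 [5,4,1,2,3],
 [5,4,2,1,3],
 [4,5,2,1,3],
 [4,2,5,1,3],
 [4,2,1,5,3],
 [4,2,1,3,5],
 [4,2,3,1,5],
 [4,2,3,5,1],
 [4,2,5,3,1],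
 [4,5,2,3,1],
 [5,4,2,3,1],
 [5,2,4,3,1],
 [2,5,4,3,1],
 [2,4,5,3,1],
 [2,4,3,5,1],
 [2,4,3,1,5],
 [2,4,1,3,5],
 [2,4,1,5,3],
 [2,4,5,1,3],
 [2,5,4,1,3],
 [5,2,4,1,3],
 [5,2,1,4,3],
 [2,5,1,4,3],
 [2,1,5,4,3],
 [1,2,5,4,3],
 [1,5,2,4,3],
 [5,1,2,4,3],
 [5,1,4,2,3],
 [5,1,4,3,2],
 [1,5,4,3,2],
 [1,5,4,2,3],
 [1,4,5,2,3],
 [1,4,5,3,2],
 [1,4,3,5,2],
 [1,4,3,2,5],
 [1,4,2,3,5],
 [1,4,2,5,3],
 [1,2,4,5,3],
 [2,1,4,5,3],
 [2,1,4,3,5],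
 [1,2,4,3,5]]"

lemma base5: "reverse_adj_gray_code 5 L5"
  unfolding L5_def by (rule rag_of_check) code_simp+



section \<open>Parity obstruction\<close>

fun ninv :: "nat list \<Rightarrow> nat" where
  "ninv [] = 0"
| "ninv (x # xs) = length (filter (\<lambda>y. y < x) xs) + ninv xs"

lemma length_filter_adj_swap:
  "Suc j < length w \<Longrightarrow> length (filter P (adj_swap j w)) = length (filter P w)"
proof -
  assume a: "Suc j < length w"
  have "mset (filter P (adj_swap j w)) = mset (filter P w)"
    using mset_adj_swap[OF a] by (simp add: mset_filter)
  then show ?thesis by (metis size_mset)
qed

lemma inv_adj_swap:
  "Suc j < length w \<Longrightarrow> w ! j \<noteq> w ! Suc j \<Longrightarrow> odd (ninv (adj_swap j w) + ninv w)"
proof (induction w arbitrary: j)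
  case Nil then show ?case by simp
next
  case (Cons x w)
  show ?case
  proof (cases j)
    case 0
    with Cons.prems obtain b r where w: "w = b # r" by (cases w) auto
    have ne: "x \<noteq> b" using Cons.prems 0 w by simp
    have "ninv (adj_swap j (x # w)) + ninv (x # w) =
      2 * (length (filter (\<lambda>y. y < b) r) + length (filter (\<lambda>y. y < x) r) + ninv r) +
      (if x < b then 1 else 0) + (if b < x then 1 else 0)"
      using 0 w by simp
    then show ?thesis using ne by auto
  next
    case (Suc j')
    with Cons.prems have a: "Suc j' < length w" "w ! j' \<noteq> w ! Suc j'" by auto
    have "ninv (adj_swap j (x # w)) + ninv (x # w) =
      2 * length (filter (\<lambda>y. y < x) w) + (ninv (adj_swap j' w) + ninv w)"
      using Suc length_filter_adj_swap[OF a(1)] by simp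
    then show ?thesis using Cons.IH[OF a] by simp
  qed
qed

lemma inv_snoc: "ninv (xs @ [x]) = ninv xs + length (filter (\<lambda>y. x < y) xs)"
  by (induction xs) auto

lemma inv_rev: "distinct w \<Longrightarrow> 2 * (ninv (rev w) + ninv w) = length w * (length w - 1)"
proof (induction w)
  case Nil then show ?case by simp
next
  case (Cons x w)
  have d: "distinct w" "x \<notin> set w" using Cons.prems by auto
  have split: "length (filter (\<lambda>y. y < x) w) + length (filter (\<lambda>y. x < y) w) = length w"
  proof -
    have "length (filter (\<lambda>y. y < x) w) + length (filter (\<lambda>y. \<not> y < x) w) = length w"
      by (rule sum_length_filter_compl)
    moreover have "filter (\<lambda>y. \<not> y < x) w = filter (\<lambda>y. x < y) w"
    proof (rule filter_cong[OF refl])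
      fix y assume "y \<in> set w"
      then have "y \<noteq> x" using d(2) by auto
      then show "(\<not> y < x) = (x < y)" by auto
    qed
    ultimately show ?thesis by simp
  qed
  have "2 * (ninv (rev (x # w)) + ninv (x # w)) = 2 * (ninv (rev w) + ninv w) + 2 * length w"
  proof -
    have "length (filter (\<lambda>y. x < y) (rev w)) = length (filter (\<lambda>y. x < y) w)"
      by (simp add: rev_filter[symmetric])
    then show ?thesis using split by (simp add: inv_snoc)
  qed
  also have "\<dots> = length w * (length w - 1) + 2 * length w" using Cons.IH d by simp
  also have "\<dots> = length (x # w) * (length (x # w) - 1)" by (cases w) (auto simp: algebra_simps)
  finally show ?case .
qed

lemma necessity:
  assumes L: "reverse_adj_gray_code n L" and n: "4 \<le> n"
  shows "n mod 4 = 0 \<or> n mod 4 = 1"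
proof -
  define H :: nat where "H = fact n div 2"
  have d4: "(4::nat) dvd fact n" using n by (intro dvd_fact) auto
  have f4: "4 \<le> (fact n :: nat)" by (rule dvd_imp_le[OF d4]) (simp add: fact_gt_zero)
  have He: "even H" "0 < H" unfolding H_def using d4 f4 by auto
  have len: "length L = fact n" and adj: "\<forall>i. Suc i < length L \<longrightarrow> adj_interchange (L ! i) (L ! Suc i)"
    and sym: "\<forall>i < fact n div 2. L ! (i + fact n div 2) = rev (L ! i)"
    and sL: "set L = permutations_of_set {1..n}"
    using L unfolding reverse_adj_gray_code_def by auto
  have dw: "distinct (L ! k)" if "k < length L" for k
  proof -
    have "L ! k \<in> permutations_of_set {1..n}" using sL nth_mem[OF that] by simp
    then show ?thesis by (rule permutations_of_setD(2))
  qed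
  have par: "even (ninv (L ! k) + ninv (L ! 0) + k)" if "k < length L" for k
    using that
  proof (induction k)
    case 0 then show ?case by simp
  next
    case (Suc k)
    obtain j where j: "Suc j < length (L ! k)" "L ! Suc k = adj_swap j (L ! k)"
      using adj Suc.prems unfolding adj_interchange_def by blast
    have "(L ! k) ! j \<noteq> (L ! k) ! Suc j"
      using dw[of k] Suc.prems j(1) by (simp add: nth_eq_iff_index_eq)
    then have "odd (ninv (L ! Suc k) + ninv (L ! k))" using inv_adj_swap j by simp
    moreover have "even (ninv (L ! k) + ninv (L ! 0) + k)" using Suc by simp
    ultimately show ?case by presburger
  qed
  have HL: "H < length L" using len unfolding H_def by (simp add: fact_gt_zero)
  have "L ! (0 + fact n div 2) = rev (L ! 0)" using sym He(2) unfolding H_def by blast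
  then have "L ! H = rev (L ! 0)" by (simp add: H_def)
  then have "even (ninv (rev (L ! 0)) + ninv (L ! 0))" using par[OF HL] He(1) by simp
  moreover have "2 * (ninv (rev (L ! 0)) + ninv (L ! 0)) = length (L ! 0) * (length (L ! 0) - 1)"
  proof -
    have "0 < length L" using HL by linarith
    then show ?thesis using inv_rev[OF dw[OF \<open>0 < length L\<close>]] by simp
  qed
  moreover have "length (L ! 0) = n"
  proof -
    have "0 < length L" using HL by linarith
    then have "L ! 0 \<in> permutations_of_set {1..n}" using sL nth_mem by blast
    then have "set (L ! 0) = {1..n}" "distinct (L ! 0)" by (auto dest: permutations_of_setD)
    then have "card {1..n} = length (L ! 0)" by (metis distinct_card)
    then show ?thesis by simp
  qed
  ultimately have e2: "even (ninv (rev (L ! 0)) + ninv (L ! 0))"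
      and e3: "2 * (ninv (rev (L ! 0)) + ninv (L ! 0)) = n * (n - 1)" by simp_all
  from e2 obtain k where "ninv (rev (L ! 0)) + ninv (L ! 0) = 2 * k" by (rule evenE)
  with e3 have "n * (n - 1) = 4 * k" by simp
  then have "4 dvd n * (n - 1)" by simp
  then have z: "(n * (n - 1)) mod 4 = 0" by simp
  show ?thesis
  proof (rule ccontr)
    assume "\<not> (n mod 4 = 0 \<or> n mod 4 = 1)"
    then have c: "n mod 4 = 2 \<or> n mod 4 = 3" by auto
    define q where "q = n div 4"
    have nq: "n = 4 * q + n mod 4" unfolding q_def by simp
    have "(n * (n - 1)) mod 4 = 2"
    proof (cases "n mod 4 = 2")
      case True
      then have n': "n = 4 * q + 2" using nq by simp
      then have "n - 1 = 4 * q + 1" by simp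
      then have e: "n * (n - 1) = 4 * (4 * q * q + 3 * q) + 2" using n' by (simp add: algebra_simps)
      have "(n * (n - 1)) mod 4 = (4 * (4 * q * q + 3 * q) + 2) mod 4" by (simp only: e)
      also have "\<dots> = 2" by presburger
      finally show ?thesis .
    next
      case False
      then have n': "n = 4 * q + 3" using nq c by simp
      then have "n - 1 = 4 * q + 2" by simp
      then have e: "n * (n - 1) = 4 * (4 * q * q + 5 * q + 1) + 2" using n' by (simp add: algebra_simps)
      have "(n * (n - 1)) mod 4 = (4 * (4 * q * q + 5 * q + 1) + 2) mod 4" by (simp only: e)
      also have "\<dots> = 2" by presburger
      finally show ?thesis .
    qed
    with z show False by simp
  qed
qed

lemma sufficiency:
  "1 \<le> n \<Longrightarrow> n \<le> 5 \<or> n mod 4 = 0 \<or> n mod 4 = 1 \<Longrightarrow> \<exists>L. reverse_adj_gray_code n L"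
proof (induction n rule: less_induct)
  case (less n)
  show ?case
  proof (cases "n \<le> 5")
    case True
    then have "n = 1 \<or> n = 2 \<or> n = 3 \<or> n = 4 \<or> n = 5" using less.prems by auto
    then show ?thesis using base1 base2 base3 base4 base5 by blast
  next
    case False
    then have n8: "8 \<le> n" and nm: "n mod 4 = 0 \<or> n mod 4 = 1" using less.prems by presburger+
    show ?thesis
    proof (cases "n mod 4 = 0")
      case True
      define m where "m = n - 4"
      have m: "4 \<le> m" "m mod 4 = 0" "m < n" "n = m + 4" using n8 True unfolding m_def by presburger+
      obtain B where "reverse_adj_gray_code m B" using less.IH[OF m(3)] m by auto
      moreover have "even m" using m by presburger
      ultimately show ?thesis using step4 m by metis
    next
      case False
      then have n1: "n mod 4 = 1" using nm by simp
      define m where "m = n - 5"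
      have m: "4 \<le> m" "m mod 4 = 0" "m < n" "n = m + 5" using n8 n1 unfolding m_def by presburger+
      obtain B where "reverse_adj_gray_code m B" using less.IH[OF m(3)] m by auto
      moreover have "even m" using m by presburger
      ultimately show ?thesis using step5 m by metis
    qed
  qed
qed

theorem theorem7:
  fixes n :: nat
  assumes "n \<ge> 1"
  shows "(\<exists>L. reverse_adj_gray_code n L) \<longleftrightarrow> (n \<le> 4 \<or> n mod 4 = 0 \<or> n mod 4 = 1)"
proof
  assume "\<exists>L. reverse_adj_gray_code n L"
  then obtain L where L: "reverse_adj_gray_code n L" by blast
  show "n \<le> 4 \<or> n mod 4 = 0 \<or> n mod 4 = 1"
  proof (cases "n \<le> 4")
    case False
    then show ?thesis using necessity[OF L] by simp
  qed simp
next
  assume "n \<le> 4 \<or> n mod 4 = 0 \<or> n mod 4 = 1"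
  then show "\<exists>L. reverse_adj_gray_code n L" using sufficiency assms by auto
qed

end
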